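(* If the compact hyperbolic manifold $M_\Gamma$ contains $n$ pairwise disjoint embedded totally geodesic hypersurfaces, then $\dim H^1(\Gamma,{\mathbb R}^{d,1})\ge n$.
   Context: Minkowski space ${\mathbb R}^{d,1}$ is ${\mathbb R}^{d+1}$ with $\langle x,y\rangle_{d,1}=x_1y_1+\dots+x_dy_d-x_{d+1}y_{d+1}$. $O_+(d,1)$ is the group of linear maps preserving $\langle\cdot,\cdot\rangle_{d,1}$ and the sheet $\mathcal H^d=\{\langle x,x\rangle_{d,1}=-1,\ x_{d+1}>0\}$ (a model of hyperbolic space). $d\ge2$ and $\Gamma\subset O_+(d,1)$ is a subgroup acting freely, properly discontinuously and cocompactly on $\mathcal H^d$, so that $M_\Gamma=\mathcal H^d/\Gamma$ is a compact hyperbolic manifold, assumed oriented. A cocycle is a map $\tau:\Gamma\to{\mathbb R}^{d,1}$ with $\tau(AB)=\tau(A)+A\tau(B)$ for all $A,B\in\Gamma$; a coboundary is a cocycle of the form $\tau(A)=Av-v$ for a fixed $v\in{\mathbb R}^{d,1}$, and $H^1(\Gamma,{\mathbb R}^{d,1})$ is the quotient vector space of cocycles by coboundaries. *)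

theory Defs
  imports "HOL-Analysis.Analysis"
begin

text \<open>Minkowski space R^{d,1}: vectors real^'n with CARD('n) = d+1, and a
  distinguished time coordinate t (playing the role of x_{d+1}).\<close>

definition mink :: "'n::finite \<Rightarrow> real^'n \<Rightarrow> real^'n \<Rightarrow> real" where
  "mink t x y = (\<Sum>i\<in>UNIV - {t}. x$i * y$i) - x$t * y$t"

definition hyp :: "'n::finite \<Rightarrow> (real^'n) set" where
  "hyp t = {x. mink t x x = -1 \<and> x$t > 0}"

definition O_plus :: "'n::finite \<Rightarrow> (real^'n^'n) set" where
  "O_plus t = {A. (\<forall>x y. mink t (A *v x) (A *v y) = mink t x y) \<and> (\<lambda>x. A *v x) ` hyp t \<subseteq> hyp t}"

text \<open>Gamma is a subgroup of O_+(d,1) acting freely, properly discontinuously and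
  cocompactly on H^d, with oriented quotient (Gamma orientation preserving).\<close>
definition cocompact_lattice :: "'n::finite \<Rightarrow> (real^'n^'n) set \<Rightarrow> bool" where
  "cocompact_lattice t \<Gamma> \<longleftrightarrow>
     \<Gamma> \<subseteq> O_plus t \<and> mat 1 \<in> \<Gamma> \<and>
     (\<forall>A\<in>\<Gamma>. \<forall>B\<in>\<Gamma>. A ** B \<in> \<Gamma>) \<and> (\<forall>A\<in>\<Gamma>. matrix_inv A \<in> \<Gamma>) \<and>
     (\<forall>A\<in>\<Gamma>. \<forall>x\<in>hyp t. A *v x = x \<longrightarrow> A = mat 1) \<and>
     (\<forall>K. compact K \<and> K \<subseteq> hyp t \<longrightarrow> finite {A\<in>\<Gamma>. (\<lambda>x. A *v x) ` K \<inter> K \<noteq> {}}) \<and>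
     (\<exists>K. compact K \<and> K \<subseteq> hyp t \<and> (\<Union>A\<in>\<Gamma>. (\<lambda>x. A *v x) ` K) = hyp t)"

definition orientation_preserving :: "(real^'n::finite^'n) set \<Rightarrow> bool" where
  "orientation_preserving \<Gamma> \<longleftrightarrow> (\<forall>A\<in>\<Gamma>. det A > 0)"

definition hplane :: "'n::finite \<Rightarrow> real^'n \<Rightarrow> (real^'n) set" where
  "hplane t v = {x\<in>hyp t. mink t x v = 0}"

text \<open>An embedded (closed) totally geodesic hypersurface of M_Gamma, described by one
  lift hplane t v: its Gamma-translates are equal to it or disjoint from it
  (embeddedness), and their union (the full preimage in H^d) is closed.\<close>
definition embedded_tg_hypersurface :: "'n::finite \<Rightarrow> (real^'n^'n) set \<Rightarrow> real^'n \<Rightarrow> bool" where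
  "embedded_tg_hypersurface t \<Gamma> v \<longleftrightarrow>
     mink t v v = 1 \<and>
     (\<forall>A\<in>\<Gamma>. (\<lambda>x. A *v x) ` hplane t v = hplane t v \<or> (\<lambda>x. A *v x) ` hplane t v \<inter> hplane t v = {}) \<and>
     closed (\<Union>A\<in>\<Gamma>. (\<lambda>x. A *v x) ` hplane t v)"

text \<open>The images in M_Gamma of the hypersurfaces with lifts hplane t v, hplane t w are disjoint.\<close>
definition disjoint_hypersurfaces :: "'n::finite \<Rightarrow> (real^'n^'n) set \<Rightarrow> real^'n \<Rightarrow> real^'n \<Rightarrow> bool" where
  "disjoint_hypersurfaces t \<Gamma> v w \<longleftrightarrow> (\<forall>A\<in>\<Gamma>. (\<lambda>x. A *v x) ` hplane t v \<inter> hplane t w = {})"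

definition cocycle :: "(real^'n::finite^'n) set \<Rightarrow> (real^'n^'n \<Rightarrow> real^'n) \<Rightarrow> bool" where
  "cocycle \<Gamma> \<tau> \<longleftrightarrow> (\<forall>A\<in>\<Gamma>. \<forall>B\<in>\<Gamma>. \<tau> (A ** B) = \<tau> A + A *v \<tau> B)"

definition coboundary :: "(real^'n::finite^'n) set \<Rightarrow> (real^'n^'n \<Rightarrow> real^'n) \<Rightarrow> bool" where
  "coboundary \<Gamma> \<tau> \<longleftrightarrow> (\<exists>u. \<forall>A\<in>\<Gamma>. \<tau> A = A *v u - u)"

definition H1_dim_ge :: "(real^'n::finite^'n) set \<Rightarrow> nat \<Rightarrow> bool" where
  "H1_dim_ge \<Gamma> n \<longleftrightarrow>
     (\<exists>\<tau>::nat \<Rightarrow> real^'n^'n \<Rightarrow> real^'n.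
        (\<forall>i<n. cocycle \<Gamma> (\<tau> i)) \<and>
        (\<forall>c::nat \<Rightarrow> real. coboundary \<Gamma> (\<lambda>A. \<Sum>i<n. c i *\<^sub>R \<tau> i A) \<longrightarrow> (\<forall>i<n. c i = 0)))"

end

theory Submission
  imports Defs
begin

definition sp :: "'n::finite \<Rightarrow> real^'n \<Rightarrow> real^'n" where
  "sp t x = (\<chi> i. if i = t then 0 else x$i)"

lemma mink_sp: "mink t x y = sp t x \<bullet> sp t y - x$t * y$t"
proof -
  have "sp t x \<bullet> sp t y = (\<Sum>i\<in>UNIV. (if i = t then 0 else x$i*y$i))"
    by (simp add: sp_def inner_vec_def if_distrib cong: if_cong)
  also have "\<dots> = (\<Sum>i\<in>UNIV - {t}. x$i*y$i)"
    by (simp add: sum.If_cases Diff_eq)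
  finally show ?thesis by (simp add: mink_def)
qed

lemma sp_t [simp]: "sp t x $ t = 0" by (simp add: sp_def)

lemma norm_sp: "(norm x)^2 = (norm (sp t x))^2 + (x$t)^2"
proof -
  have "(norm x)^2 = (\<Sum>i\<in>UNIV. (x$i)^2)"
    by (simp add: norm_vec_def L2_set_def sum_nonneg)
  also have "\<dots> = (\<Sum>i\<in>UNIV - {t}. (x$i)^2) + (x$t)^2"
    by (metis add.commute finite UNIV_I sum.remove)
  also have "(\<Sum>i\<in>UNIV - {t}. (x$i)^2) = (norm (sp t x))^2"
  proof -
    have "(norm (sp t x))^2 = (\<Sum>i\<in>UNIV. (sp t x $ i)^2)"
      by (simp add: norm_vec_def L2_set_def sum_nonneg)
    also have "\<dots> = (\<Sum>i\<in>UNIV. (if i = t then 0 else (x$i)^2))"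
      by (rule sum.cong) (auto simp: sp_def)
    also have "\<dots> = (\<Sum>i\<in>UNIV - {t}. (x$i)^2)"
      by (simp add: sum.If_cases Diff_eq)
    finally show ?thesis by simp
  qed
  finally show ?thesis .
qed

lemma mink_sym: "mink t x y = mink t y x"
  by (simp add: mink_def mult.commute)

lemma mink_add_left: "mink t (x + y) z = mink t x z + mink t y z"
  by (simp add: mink_def sum.distrib algebra_simps)
lemma mink_add_right: "mink t z (x + y) = mink t z x + mink t z y"
  by (simp add: mink_def sum.distrib algebra_simps)
lemma mink_diff_left: "mink t (x - y) z = mink t x z - mink t y z"
  by (simp add: mink_def sum_subtractf algebra_simps)
lemma mink_diff_right: "mink t z (x - y) = mink t z x - mink t z y"
  by (simp add: mink_def sum_subtractf algebra_simps)
lemma mink_scale_left: "mink t (a *\<^sub>R x) z = a * mink t x z"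
  by (simp add: mink_def sum_distrib_left algebra_simps)
lemma mink_scale_right: "mink t z (a *\<^sub>R x) = a * mink t z x"
  by (simp add: mink_def sum_distrib_left algebra_simps)
lemma mink_neg_left: "mink t (- x) z = - mink t x z"
  by (simp add: mink_def sum_negf algebra_simps)
lemma mink_neg_right: "mink t z (- x) = - mink t z x"
  by (simp add: mink_def sum_negf algebra_simps)
lemma mink_zero_left [simp]: "mink t 0 z = 0" by (simp add: mink_def)
lemma mink_zero_right [simp]: "mink t z 0 = 0" by (simp add: mink_def)

lemmas mink_lin = mink_add_left mink_add_right mink_diff_left mink_diff_right
  mink_scale_left mink_scale_right mink_neg_left mink_neg_right

lemma mink_sum_right: "finite S \<Longrightarrow> mink t z (\<Sum>w\<in>S. f w) = (\<Sum>w\<in>S. mink t z (f w))"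
  by (induct S rule: finite_induct) (auto simp: mink_add_right)

lemma tendsto_mink [tendsto_intros]:
  assumes "(f \<longlongrightarrow> a) F" "(g \<longlongrightarrow> b) F"
  shows "((\<lambda>k. mink t (f k) (g k)) \<longlongrightarrow> mink t a b) F"
  unfolding mink_def
  by (intro tendsto_intros tendsto_vec_nth assms)

lemma continuous_on_mink [continuous_intros]:
  assumes "continuous_on S f" "continuous_on S g"
  shows "continuous_on S (\<lambda>k. mink t (f k) (g k))"
  unfolding mink_def
  by (intro continuous_intros continuous_on_component assms)

lemma hyp_iff: "x \<in> hyp t \<longleftrightarrow> mink t x x = -1 \<and> x$t > 0"
  by (simp add: hyp_def)

lemma mink_self_sp: "mink t x x = (norm (sp t x))^2 - (x$t)^2"
  by (simp add: mink_sp dot_square_norm power2_eq_square)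

lemma hyp_sp: "x \<in> hyp t \<Longrightarrow> (norm (sp t x))^2 = (x$t)^2 - 1"
  using mink_self_sp[of t x] by (simp add: hyp_def)

lemma rcs:
  assumes "x \<in> hyp t" "y \<in> hyp t"
  shows "mink t x y \<le> -1"
proof -
  define X where "X = norm (sp t x)"
  define Y where "Y = norm (sp t y)"
  have X2: "(x$t)^2 = 1 + X^2" using hyp_sp[OF assms(1)] unfolding X_def by simp
  have Y2: "(y$t)^2 = 1 + Y^2" using hyp_sp[OF assms(2)] unfolding Y_def by simp
  have pos: "x$t > 0" "y$t > 0" using assms by (auto simp: hyp_def)
  have cs: "sp t x \<bullet> sp t y \<le> X * Y"
    unfolding X_def Y_def by (rule norm_cauchy_schwarz)
  have e1: "(x$t * y$t)^2 = (1 + X^2) * (1 + Y^2)" unfolding power_mult_distrib X2 Y2 ..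
  have e2: "(1 + X^2) * (1 + Y^2) = (1 + X*Y)^2 + (X - Y)^2"
    by (simp add: power2_eq_square algebra_simps)
  have "(1 + X*Y)^2 \<le> (x$t * y$t)^2" unfolding e1 e2 by simp
  moreover have "0 \<le> x$t * y$t" using pos by simp
  ultimately have "1 + X*Y \<le> x$t * y$t" by (rule power2_le_imp_le)
  thus ?thesis using cs unfolding mink_sp by linarith
qed

lemma future:
  assumes x: "x \<in> hyp t" and a: "mink t a a < 0" and xa: "mink t x a < 0"
  shows "a$t > 0"
proof (rule ccontr)
  assume neg: "\<not> a$t > 0"
  define X where "X = norm (sp t x)"
  define A where "A = norm (sp t a)"
  have X0: "0 \<le> X" "0 \<le> A" unfolding X_def A_def by simp_all
  have X2: "X^2 = (x$t)^2 - 1" using hyp_sp[OF x] unfolding X_def by simp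
  have A2: "A^2 < (a$t)^2" using a unfolding mink_self_sp A_def by simp
  have xt: "x$t > 0" using x by (simp add: hyp_def)
  have "X^2 < (x$t)^2" using X2 by simp
  hence Xl: "X < x$t" using xt power2_less_imp_less less_imp_le by blast
  have "A^2 < \<bar>a$t\<bar>^2" using A2 by simp
  hence Al: "A < \<bar>a$t\<bar>" using power2_less_imp_less abs_ge_zero by blast
  have cs0: "\<bar>sp t x \<bullet> sp t a\<bar> \<le> X * A" unfolding X_def A_def by (rule Cauchy_Schwarz_ineq2)
  hence cs: "- (X * A) \<le> sp t x \<bullet> sp t a" by linarith
  have "X * A < x$t * \<bar>a$t\<bar>"
    using Xl Al X0 by (intro mult_strict_mono') simp_all
  moreover have "\<bar>a$t\<bar> = - (a$t)" using neg by simp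
  ultimately have "mink t x a > 0" using cs unfolding mink_sp by simp
  with xa show False by simp
qed

definition nrm :: "'n::finite \<Rightarrow> real^'n \<Rightarrow> real^'n" where
  "nrm t a = (1 / sqrt (- mink t a a)) *\<^sub>R a"

lemma mink_nrm_left: "mink t (nrm t a) w = (1 / sqrt (- mink t a a)) * mink t a w"
  unfolding nrm_def mink_scale_left ..

lemma nrm_hyp:
  assumes "mink t a a < 0" "a$t > 0"
  shows "nrm t a \<in> hyp t"
proof -
  have s: "sqrt (- mink t a a) > 0" using assms by simp
  have "mink t (nrm t a) (nrm t a) = (1 / sqrt (- mink t a a)) * (1 / sqrt (- mink t a a)) * mink t a a"
    unfolding nrm_def mink_scale_left mink_scale_right by simp
  also have "\<dots> = mink t a a / (sqrt (- mink t a a))^2" by (simp add: power2_eq_square)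
  also have "\<dots> = -1" using assms(1) by simp
  finally have "mink t (nrm t a) (nrm t a) = -1" .
  moreover have "nrm t a $ t > 0" using s assms unfolding nrm_def by simp
  ultimately show ?thesis by (simp add: hyp_def)
qed

lemma nrm_zero_iff:
  assumes "mink t a a < 0"
  shows "mink t (nrm t a) w = 0 \<longleftrightarrow> mink t a w = 0"
  using assms by (simp add: mink_nrm_left)

lemma sgn_mink_nrm:
  assumes "mink t a a < 0"
  shows "sgn (mink t (nrm t a) w) = sgn (mink t a w)"
  using assms by (simp add: mink_nrm_left sgn_mult)

lemma hyp_closed: "closed (hyp t)"
proof -
  have "hyp t = {x. mink t x x = -1} \<inter> {x. x$t \<ge> 0}"
  proof (intro set_eqI iffI)
    fix x assume "x \<in> hyp t" thus "x \<in> {x. mink t x x = -1} \<inter> {x. x$t \<ge> 0}"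
      by (simp add: hyp_def)
  next
    fix x :: "real^'a" assume h: "x \<in> {x. mink t x x = -1} \<inter> {x. x$t \<ge> 0}"
    hence m: "mink t x x = -1" and p: "0 \<le> x$t" by auto
    have "x$t \<noteq> 0"
    proof
      assume "x$t = 0"
      hence "mink t x x \<ge> 0" unfolding mink_self_sp by simp
      with m show False by simp
    qed
    with m p show "x \<in> hyp t" by (simp add: hyp_def)
  qed
  moreover have "closed {x. mink t x x = (-1::real)}"
  proof -
    have c: "continuous_on UNIV (\<lambda>x::real^'a. mink t x x)"
      by (rule continuous_on_mink[OF continuous_on_id continuous_on_id])
    show ?thesis by (rule closed_Collect_eq[OF c continuous_on_const])
  qed
  moreover have "closed {x::real^'a. x$t \<ge> 0}"
  proof -
    have c: "continuous_on UNIV (\<lambda>x::real^'a. x$t)"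
      by (rule continuous_on_component[OF continuous_on_id])
    show ?thesis by (rule closed_Collect_le[OF continuous_on_const c])
  qed
  ultimately show ?thesis by auto
qed

lemma mink_comb:
  "mink t (p *\<^sub>R x + q *\<^sub>R y) (p *\<^sub>R x + q *\<^sub>R y)
     = p*p*mink t x x + 2*p*q*mink t x y + q*q*mink t y y"
proof -
  have "mink t (p *\<^sub>R x + q *\<^sub>R y) (p *\<^sub>R x + q *\<^sub>R y)
     = p*(p*mink t x x + q*mink t x y) + q*(p*mink t y x + q*mink t y y)"
    unfolding mink_add_left mink_add_right mink_scale_left mink_scale_right by (simp add: mink_sym[of t y x])
  also have "\<dots> = p*p*mink t x x + 2*p*q*mink t x y + q*q*mink t y y"
    by (simp add: mink_sym[of t y x] algebra_simps)
  finally show ?thesis .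
qed

lemma seg_hyp:
  assumes "x \<in> hyp t" "y \<in> hyp t" "0 \<le> s" "s \<le> 1"
  shows "mink t ((1-s) *\<^sub>R x + s *\<^sub>R y) ((1-s) *\<^sub>R x + s *\<^sub>R y) \<le> -1"
    and "((1-s) *\<^sub>R x + s *\<^sub>R y) $ t > 0"
proof -
  have xy: "mink t x y \<le> -1" by (rule rcs[OF assms(1,2)])
  have xx: "mink t x x = -1" and yy: "mink t y y = -1" using assms by (auto simp: hyp_def)
  have ps: "0 \<le> 2 * (1 - s) * s" using assms by simp
  have "2 * (1 - s) * s*mink t x y \<le> 2 * (1 - s) * s*(-1)" using mult_left_mono[OF xy ps] .
  moreover have "mink t ((1-s) *\<^sub>R x + s *\<^sub>R y) ((1-s) *\<^sub>R x + s *\<^sub>R y)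
      = - ((1 - s) * (1 - s)) + 2 * (1 - s) * s*mink t x y - s * s"
    unfolding mink_comb xx yy by simp
  moreover have "- ((1 - s) * (1 - s)) + 2 * (1 - s) * s*(-1) - s * s = (-1::real)" by (simp add: algebra_simps)
  ultimately show "mink t ((1-s) *\<^sub>R x + s *\<^sub>R y) ((1-s) *\<^sub>R x + s *\<^sub>R y) \<le> -1" by linarith
  have "x$t > 0" "y$t > 0" using assms by (auto simp: hyp_def)
  hence "0 \<le> (1-s) * x$t" "0 \<le> s * y$t" using assms(3,4) by simp_all
  moreover have "0 < (1-s) * x$t \<or> 0 < s * y$t"
  proof (cases "s = 0")
    case True thus ?thesis using \<open>x$t > 0\<close> by simp
  next
    case False thus ?thesis using \<open>y$t > 0\<close> assms(3) by simp
  qed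
  ultimately show "((1-s) *\<^sub>R x + s *\<^sub>R y) $ t > 0" by simp linarith
qed

lemma norm_bound:
  assumes x: "x \<in> hyp t" and xw: "mink t x w = 0" and ww: "mink t w w = 1"
  shows "norm w \<le> 2 * norm x"
proof -
  define X where "X = norm (sp t x)"
  define W where "W = norm (sp t w)"
  have X2: "X^2 = (x$t)^2 - 1" using hyp_sp[OF x] unfolding X_def by simp
  have W2: "W^2 = 1 + (w$t)^2" using ww unfolding mink_self_sp W_def by simp
  have eq: "sp t x \<bullet> sp t w = x$t * w$t" using xw unfolding mink_sp by simp
  have "\<bar>x$t * w$t\<bar> \<le> X * W" using Cauchy_Schwarz_ineq2[of "sp t x" "sp t w"]
    unfolding eq X_def W_def .
  hence "\<bar>x$t * w$t\<bar>^2 \<le> (X * W)^2" by (intro power_mono) simp_all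
  hence "(x$t)^2 * (w$t)^2 \<le> ((x$t)^2 - 1) * (1 + (w$t)^2)"
    unfolding power2_abs power_mult_distrib X2 W2 .
  moreover have "((x$t)^2 - 1) * (1 + (w$t)^2) = (x$t)^2 * (w$t)^2 + ((x$t)^2 - 1 - (w$t)^2)"
    by (simp add: algebra_simps)
  ultimately have wt: "(w$t)^2 \<le> (x$t)^2 - 1" by linarith
  have "(norm w)^2 = W^2 + (w$t)^2" using norm_sp[of w t] unfolding W_def .
  also have "\<dots> \<le> 2 * (x$t)^2" using W2 wt by simp
  also have "\<dots> \<le> 2 * (norm x)^2" using norm_sp[of x t] by simp
  also have "\<dots> \<le> (2 * norm x)^2" by (simp add: power2_eq_square)
  finally show ?thesis by (rule power2_le_imp_le) simp
qed

lemma spacelike: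
  assumes x: "x \<in> hyp t" and z: "z \<noteq> 0" and xz: "mink t x z = 0"
  shows "mink t z z > 0"
proof -
  define X where "X = norm (sp t x)"
  define Z where "Z = norm (sp t z)"
  have X2: "X^2 = (x$t)^2 - 1" using hyp_sp[OF x] unfolding X_def by simp
  have xt: "x$t > 0" using x by (simp add: hyp_def)
  have eq: "sp t x \<bullet> sp t z = x$t * z$t" using xz unfolding mink_sp by simp
  have "\<bar>x$t * z$t\<bar> \<le> X * Z" using Cauchy_Schwarz_ineq2[of "sp t x" "sp t z"]
    unfolding eq X_def Z_def .
  hence "\<bar>x$t * z$t\<bar>^2 \<le> (X * Z)^2" by (intro power_mono) simp_all
  hence cs: "(x$t)^2 * (z$t)^2 \<le> ((x$t)^2 - 1) * Z^2"
    unfolding power2_abs power_mult_distrib X2 .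
  show ?thesis
  proof (cases "Z = 0")
    case True
    hence "(x$t)^2 * (z$t)^2 \<le> 0" using cs by simp
    hence "z$t = 0" using xt by (simp add: mult_le_0_iff)
    moreover have "sp t z = 0" using True Z_def by simp
    ultimately have "z = 0"
    proof (intro vec_eq_iff[THEN iffD2] allI)
      fix i
      assume zt: "z$t = 0" and s0: "sp t z = 0"
      have "sp t z $ i = 0" using s0 by simp
      thus "z$i = 0$i" using zt by (cases "i = t") (simp_all add: sp_def)
    qed
    with z show ?thesis by simp
  next
    case False
    hence Zp: "Z^2 > 0" by (simp add: Z_def)
    have "((x$t)^2 - 1) * Z^2 = (x$t)^2 * Z^2 - Z^2" by (simp add: algebra_simps)
    hence "(x$t)^2 * (z$t)^2 < (x$t)^2 * Z^2" using cs Zp by linarith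
    hence "(z$t)^2 < Z^2" using xt by simp
    thus ?thesis unfolding mink_self_sp Z_def by simp
  qed
qed

definition pp :: "'n::finite \<Rightarrow> real^'n \<Rightarrow> real^'n \<Rightarrow> real^'n" where
  "pp t x w = nrm t (x - mink t x w *\<^sub>R w)"

lemma pp_props:
  assumes x: "x \<in> hyp t" and ww: "mink t w w = 1"
  shows "pp t x w \<in> hyp t" "mink t (pp t x w) w = 0"
proof -
  define a where "a = x - mink t x w *\<^sub>R w"
  define b where "b = mink t x w"
  have xx: "mink t x x = -1" using x by (simp add: hyp_def)
  have wx: "mink t w x = b" unfolding b_def by (rule mink_sym)
  have aa: "mink t a a = -1 - b^2"
    unfolding a_def b_def[symmetric] mink_diff_left mink_diff_right mink_scale_left mink_scale_right
      xx ww wx by (simp add: b_def power2_eq_square)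
  have xa: "mink t x a = -1 - b^2"
    unfolding a_def b_def[symmetric] mink_diff_right mink_scale_right xx
    by (simp add: b_def power2_eq_square)
  have aa0: "mink t a a < 0" using aa by (smt (verit) zero_le_power2)
  have xa0: "mink t x a < 0" using xa by (smt (verit) zero_le_power2)
  have "a$t > 0" by (rule future[OF x aa0 xa0])
  thus "pp t x w \<in> hyp t" unfolding pp_def a_def[symmetric] by (rule nrm_hyp[OF aa0])
  have "mink t a w = 0" unfolding a_def mink_diff_left mink_scale_left ww by simp
  thus "mink t (pp t x w) w = 0" unfolding pp_def a_def[symmetric] by (simp add: mink_nrm_left)
qed

lemma pp_self:
  assumes x: "x \<in> hyp t" and xw: "mink t x w = 0"
  shows "pp t x w = x"
  using x xw by (simp add: pp_def nrm_def hyp_def)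

lemma tendsto_pp:
  assumes x: "x \<in> hyp t" and xq: "mink t x q = 0" and lim: "(f \<longlongrightarrow> q) F"
  shows "((\<lambda>k. pp t x (f k)) \<longlongrightarrow> x) F"
proof -
  have xx: "mink t x x = -1" using x by (simp add: hyp_def)
  have a: "((\<lambda>k. x - mink t x (f k) *\<^sub>R f k) \<longlongrightarrow> x - mink t x q *\<^sub>R q) F"
    by (intro tendsto_intros lim)
  hence a': "((\<lambda>k. x - mink t x (f k) *\<^sub>R f k) \<longlongrightarrow> x) F" using xq by simp
  have "((\<lambda>k. (1 / sqrt (- mink t (x - mink t x (f k) *\<^sub>R f k) (x - mink t x (f k) *\<^sub>R f k)))
        *\<^sub>R (x - mink t x (f k) *\<^sub>R f k)) \<longlongrightarrow> (1 / sqrt (- mink t x x)) *\<^sub>R x) F"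
    by (intro tendsto_intros a' tendsto_mink) (simp add: xx)
  thus ?thesis unfolding pp_def nrm_def using xx by simp
qed

lemma geod_hyp:
  assumes y: "y \<in> hyp t" and ey: "mink t e y = 0" and ee: "mink t e e = 1"
  shows "cosh s *\<^sub>R y + sinh s *\<^sub>R e \<in> hyp t"
proof -
  define a where "a = cosh s *\<^sub>R y + sinh s *\<^sub>R e"
  have yy: "mink t y y = -1" using y by (simp add: hyp_def)
  have ye: "mink t y e = 0" using ey by (simp add: mink_sym)
  have aa: "mink t a a = -1"
  proof -
    have "mink t a a = cosh s * cosh s * (-1) + 2 * cosh s * sinh s * 0 + sinh s * sinh s * 1"
      unfolding a_def mink_comb yy ye ee ..
    also have "\<dots> = -1" using cosh_square_eq[of s] by (simp add: power2_eq_square)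
    finally show ?thesis .
  qed
  have ya: "mink t y a = - cosh s"
    unfolding a_def mink_add_right mink_scale_right yy ye by simp
  have "a$t > 0" by (rule future[OF y]) (use aa ya cosh_real_pos[of s] in auto)
  thus ?thesis using aa by (simp add: hyp_def a_def)
qed

lemma mink_geod:
  "mink t (cosh s *\<^sub>R y + sinh s *\<^sub>R e) z = cosh s * mink t y z + sinh s * mink t e z"
  unfolding mink_add_left mink_scale_left ..

definition et :: "'n::finite \<Rightarrow> real^'n" where "et t = (\<chi> i. if i = t then 1 else 0)"

lemma et_hyp: "et t \<in> hyp t"
proof -
  have "sp t (et t) = 0" by (simp add: sp_def et_def vec_eq_iff)
  thus ?thesis unfolding hyp_def mink_sp by (simp add: et_def)
qed

lemma hplane_ne:
  assumes ww: "mink t w w = 1"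
  shows "pp t (et t) w \<in> hplane t w"
  unfolding hplane_def using pp_props[OF et_hyp ww] by blast

definition jj :: "'n::finite \<Rightarrow> real^'n \<Rightarrow> real^'n" where
  "jj t z = (\<chi> i. if i = t then - z$i else z$i)"

lemma mink_jj: "mink t x z = x \<bullet> jj t z"
proof -
  have "x \<bullet> jj t z = (\<Sum>i\<in>UNIV. (if i = t then - (x$i*z$i) else x$i*z$i))"
    unfolding inner_vec_def jj_def by (rule sum.cong) auto
  also have "\<dots> = (\<Sum>i\<in>UNIV - {t}. x$i*z$i) - x$t*z$t"
    by (subst sum.remove[of UNIV t]) auto
  finally show ?thesis unfolding mink_def ..
qed

lemma tangent_exists:
  assumes card: "CARD('n::finite) \<ge> 3" and y: "y \<in> hyp (t::'n)"
  shows "\<exists>e. mink t e y = 0 \<and> mink t e w = 0 \<and> mink t e e = 1"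
proof -
  have "dim {jj t y, jj t w} \<le> card {jj t y, jj t w}"
    by (rule dim_le_card') simp
  also have "\<dots> \<le> 2" by (simp add: card_insert_le_m1)
  finally have dl: "dim {jj t y, jj t w} < DIM(real^'n)" using card by simp
  obtain x where x0: "x \<noteq> 0" and orth: "\<And>z. z \<in> span {jj t y, jj t w} \<Longrightarrow> orthogonal x z"
    using orthogonal_to_subspace_exists[OF dl] by blast
  have xy: "mink t x y = 0" using orth[of "jj t y"] by (simp add: span_base orthogonal_def mink_jj)
  have xw: "mink t x w = 0" using orth[of "jj t w"] by (simp add: span_base orthogonal_def mink_jj)
  have pos: "mink t x x > 0" by (rule spacelike[OF y x0]) (simp add: mink_sym xy)
  define e where "e = (1 / sqrt (mink t x x)) *\<^sub>R x"
  have "mink t e e = (1 / sqrt (mink t x x)) * (1 / sqrt (mink t x x)) * mink t x x"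
    unfolding e_def mink_scale_left mink_scale_right by simp
  also have "\<dots> = 1" using pos by (simp add: field_simps)
  finally have "mink t e e = 1" .
  moreover have "mink t e y = 0" "mink t e w = 0" unfolding e_def mink_scale_left xy xw by simp_all
  ultimately show ?thesis by blast
qed

lemma mink_bound: "\<bar>mink t x y\<bar> \<le> norm x * norm y"
proof -
  have "norm (jj t y) = norm y"
  proof -
    have "\<And>i. (jj t y $ i)^2 = (y $ i)^2" by (simp add: jj_def)
    thus ?thesis unfolding norm_vec_def L2_set_def by simp
  qed
  thus ?thesis unfolding mink_jj using Cauchy_Schwarz_ineq2[of x "jj t y"] by simp
qed

lemma plane_normal:
  assumes ww: "mink t w w = 1" and w'w': "mink t w' w' = 1"
    and sub: "hplane t w \<subseteq> hplane t w'"
  shows "w' = w \<or> w' = - w"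
proof -
  define y where "y = pp t (et t) w"
  have yw: "y \<in> hplane t w" unfolding y_def by (rule hplane_ne[OF ww])
  hence y: "y \<in> hyp t" and yw0: "mink t y w = 0" by (auto simp: hplane_def)
  have yw': "mink t y w' = 0" using sub yw by (auto simp: hplane_def)
  define c where "c = mink t w' w"
  define e' where "e' = w' - c *\<^sub>R w"
  have e'y: "mink t e' y = 0"
    unfolding e'_def mink_diff_left mink_scale_left using yw0 yw' by (simp add: mink_sym)
  have e'w: "mink t e' w = 0"
    unfolding e'_def mink_diff_left mink_scale_left ww c_def by simp
  have e'e': "mink t e' e' = mink t e' w'"
    unfolding e'_def[of] mink_diff_right mink_scale_right
    using e'w by (simp add: e'_def[symmetric])
  have "e' = 0"
  proof (rule ccontr)
    assume ne: "e' \<noteq> 0"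
    have pos: "mink t e' e' > 0" by (rule spacelike[OF y ne]) (simp add: mink_sym e'y)
    define e where "e = (1 / sqrt (mink t e' e')) *\<^sub>R e'"
    have ee: "mink t e e = 1" using pos
      unfolding e_def mink_scale_left mink_scale_right by (simp add: field_simps)
    have ey: "mink t e y = 0" unfolding e_def mink_scale_left e'y by simp
    have ew: "mink t e w = 0" unfolding e_def mink_scale_left e'w by simp
    define z where "z = cosh 1 *\<^sub>R y + sinh 1 *\<^sub>R e"
    have "z \<in> hyp t" unfolding z_def by (rule geod_hyp[OF y ey ee])
    moreover have "mink t z w = 0" unfolding z_def mink_geod yw0 ew by simp
    ultimately have "z \<in> hplane t w" by (simp add: hplane_def)
    hence "mink t z w' = 0" using sub by (auto simp: hplane_def)
    hence "sinh 1 * mink t e w' = 0" unfolding z_def mink_geod yw' by simp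
    hence "mink t e w' = 0" by simp
    hence "mink t e' w' = 0" using pos unfolding e_def mink_scale_left by simp
    with pos e'e' show False by simp
  qed
  hence w'eq: "w' = c *\<^sub>R w" unfolding e'_def by simp
  hence "1 = c * c" using w'w' ww by (simp add: mink_scale_left mink_scale_right)
  hence "c = 1 \<or> c = -1" by (metis abs_if mult_cancel_right2 mult_minus_left square_eq_1_iff)
  thus ?thesis using w'eq by auto
qed

lemma hplane_scale: "a \<noteq> 0 \<Longrightarrow> hplane t (a *\<^sub>R w) = hplane t w"
  by (auto simp: hplane_def mink_scale_right)

lemma hplane_neg: "hplane t (- w) = hplane t w"
  by (auto simp: hplane_def mink_neg_right)

lemma unbounded:
  assumes card: "CARD('n::finite) \<ge> 3" and ww: "mink t w w = 1"
    and zw: "mink t z w = 0" and z0: "z \<noteq> 0"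
  shows "\<exists>y\<in>hplane (t::'n) w. \<bar>mink t y z\<bar> > M"
proof -
  define y0 where "y0 = pp t (et t) w"
  have y0w: "y0 \<in> hplane t w" unfolding y0_def by (rule hplane_ne[OF ww])
  hence y0: "y0 \<in> hyp t" and y0w0: "mink t y0 w = 0" by (auto simp: hplane_def)
  have y0y0: "mink t y0 y0 = -1" using y0 by (simp add: hyp_def)
  define a where "a = mink t y0 z"
  define K where "K = \<bar>M\<bar> + 1"
  have K: "K > 0" "K > M" unfolding K_def by auto
  have geo: "cosh s *\<^sub>R y0 + sinh s *\<^sub>R e \<in> hplane t w"
    if "mink t e y0 = 0" "mink t e e = 1" "mink t e w = 0" for s e
    using geod_hyp[OF y0 that(1,2), of s] that(3) y0w0
    by (simp add: hplane_def mink_geod)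
  define e' where "e' = z + a *\<^sub>R y0"
  have e'y: "mink t e' y0 = 0"
    unfolding e'_def mink_add_left mink_scale_left y0y0 a_def by (simp add: mink_sym)
  have e'w: "mink t e' w = 0"
    unfolding e'_def mink_add_left mink_scale_left zw y0w0 by simp
  show ?thesis
  proof (cases "e' = 0")
    case False
    have pos: "mink t e' e' > 0" by (rule spacelike[OF y0 False]) (simp add: mink_sym e'y)
    define b where "b = sqrt (mink t e' e')"
    have b: "b > 0" unfolding b_def using pos by simp
    define e where "e = (1 / b) *\<^sub>R e'"
    have ee: "mink t e e = 1" using pos
      unfolding e_def b_def mink_scale_left mink_scale_right by (simp add: field_simps)
    have ey: "mink t e y0 = 0" unfolding e_def mink_scale_left e'y by simp
    have ew: "mink t e w = 0" unfolding e_def mink_scale_left e'w by simp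
    have e'z: "mink t e' z = mink t e' e'"
    proof -
      have "mink t e' (z + a *\<^sub>R y0) = mink t e' z + a * mink t e' y0"
        by (simp only: mink_add_right mink_scale_right)
      hence "mink t e' e' = mink t e' z + a * mink t e' y0"
        by (simp only: e'_def[symmetric])
      thus ?thesis using e'y by simp
    qed
    have ez: "mink t e z = b"
      unfolding e_def mink_scale_left e'z using pos by (simp add: b_def field_simps real_sqrt_mult[symmetric])
    define s where "s = arsinh (K / b)"
    have sh: "sinh s * b = K" unfolding s_def using b by simp
    have sp: "sinh s > 0" unfolding s_def using K b by simp
    show ?thesis
    proof (cases "a \<ge> 0")
      case True
      let ?y = "cosh s *\<^sub>R y0 + sinh s *\<^sub>R e"
      have "mink t ?y z = cosh s * a + sinh s * b" unfolding mink_geod a_def[symmetric] ez ..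
      also have "\<dots> \<ge> K" using True sh by (simp add: add_nonneg_nonneg)
      finally show ?thesis using geo[OF ey ee ew, of s] K by force
    next
      case False
      let ?y = "cosh (-s) *\<^sub>R y0 + sinh (-s) *\<^sub>R e"
      have "mink t ?y z = cosh s * a - sinh s * b" unfolding mink_geod a_def[symmetric] ez by simp
      also have "\<dots> \<le> - K" using False sh by (simp add: mult_nonneg_nonpos)
      finally show ?thesis using geo[OF ey ee ew, of "-s"] K by force
    qed
  next
    case True
    hence zeq: "z = - (a *\<^sub>R y0)" unfolding e'_def by (simp add: add_eq_0_iff)
    hence a0: "a \<noteq> 0" using z0 by auto
    obtain e where ey: "mink t e y0 = 0" and ew: "mink t e w = 0" and ee: "mink t e e = 1"
      using tangent_exists[OF card y0, of w] by blast
    define s where "s = arsinh (K / \<bar>a\<bar>)"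
    have sh: "sinh s * \<bar>a\<bar> = K" unfolding s_def using a0 by simp
    have "cosh s \<ge> sinh s" by (rule sinh_le_cosh_real)
    let ?y = "cosh s *\<^sub>R y0 + sinh s *\<^sub>R e"
    have "mink t ?y z = a * cosh s"
      unfolding zeq mink_neg_right mink_scale_right mink_geod y0y0 ey by simp
    hence "\<bar>mink t ?y z\<bar> = \<bar>a\<bar> * cosh s" by (simp add: abs_mult)
    also have "\<dots> \<ge> \<bar>a\<bar> * sinh s" using \<open>cosh s \<ge> sinh s\<close> by (simp add: mult_left_mono)
    finally have "\<bar>mink t ?y z\<bar> \<ge> K" using sh by (simp add: mult.commute)
    thus ?thesis using geo[OF ey ee ew, of s] K by force
  qed
qed

lemma ivt_lin:
  fixes a b :: real
  assumes "sgn a \<noteq> sgn b"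
  shows "\<exists>s\<in>{0..1}. (1 - s) * a + s * b = 0"
proof (cases "a = 0")
  case True thus ?thesis by (intro bexI[of _ 0]) auto
next
  case a: False
  show ?thesis
  proof (cases "b = 0")
    case True thus ?thesis by (intro bexI[of _ 1]) auto
  next
    case b: False
    have opp: "(a > 0 \<and> b < 0) \<or> (a < 0 \<and> b > 0)" using a b assms
      by (auto simp: sgn_if split: if_splits)
    hence ab: "a - b \<noteq> 0" by auto
    define s where "s = a / (a - b)"
    have "0 \<le> s \<and> s \<le> 1" using opp unfolding s_def
      by (auto simp: divide_simps)
    moreover have "(1 - s) * a + s * b = 0" unfolding s_def using ab
      by (simp add: field_simps)
    ultimately show ?thesis by auto
  qed
qed

lemma mink_pp_self:
  assumes x: "x \<in> hyp t" and ww: "mink t w w = 1"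
  shows "mink t x (pp t x w) = - sqrt (1 + (mink t x w)^2)"
proof -
  define b where "b = mink t x w"
  define a where "a = x - b *\<^sub>R w"
  have xx: "mink t x x = -1" using x by (simp add: hyp_def)
  have wx: "mink t w x = b" unfolding b_def by (rule mink_sym)
  have aa: "mink t a a = -1 - b^2"
    unfolding a_def mink_diff_left mink_diff_right mink_scale_left mink_scale_right
      xx ww wx by (simp add: b_def power2_eq_square)
  have xa: "mink t x a = -1 - b^2"
    unfolding a_def mink_diff_right mink_scale_right xx
    by (simp add: b_def power2_eq_square)
  have "mink t x (pp t x w) = (1 / sqrt (1 + b^2)) * (-1 - b^2)"
    unfolding pp_def b_def[symmetric] a_def[symmetric] nrm_def mink_scale_right aa xa by simp
  also have "\<dots> = - sqrt (1 + b^2)"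
  proof -
    have p: "1 + b^2 > 0" by (simp add: add_pos_nonneg)
    have "(1 + b^2) / sqrt (1 + b^2) = sqrt (1 + b^2)" using p by (simp add: real_div_sqrt)
    moreover have "(1 / sqrt (1 + b^2)) * (-1 - b^2) = - ((1 + b^2) / sqrt (1 + b^2))"
      by (simp add: minus_divide_left)
    ultimately show ?thesis by simp
  qed
  finally show ?thesis unfolding b_def .
qed

locale setting =
  fixes t :: "'n::finite" and G :: "(real^'n^'n) set" and n :: nat and v :: "nat \<Rightarrow> real^'n"
  assumes card3: "CARD('n) \<ge> 3"
    and lat: "cocompact_lattice t G"
    and orient: "orientation_preserving G"
    and emb: "\<forall>i<n. embedded_tg_hypersurface t G (v i)"
    and disj: "\<forall>i<n. \<forall>j<n. i \<noteq> j \<longrightarrow> disjoint_hypersurfaces t G (v i) (v j)"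
begin

lemma G_Oplus: assumes "A \<in> G" shows "A \<in> O_plus t"
proof -
  have "G \<subseteq> O_plus t" using lat unfolding cocompact_lattice_def by (rule conjunct1)
  thus ?thesis using assms by (rule subsetD)
qed

lemma G_O: "A \<in> G \<Longrightarrow> mink t (A *v x) (A *v y) = mink t x y"
  using G_Oplus unfolding O_plus_def by blast

lemma G_hyp: "A \<in> G \<Longrightarrow> x \<in> hyp t \<Longrightarrow> A *v x \<in> hyp t"
  using G_Oplus unfolding O_plus_def by blast

lemma G_one: "mat 1 \<in> G"
  using lat by (auto simp: cocompact_lattice_def)

lemma G_mult: "A \<in> G \<Longrightarrow> B \<in> G \<Longrightarrow> A ** B \<in> G"
  using lat by (auto simp: cocompact_lattice_def)

lemma G_inv: "A \<in> G \<Longrightarrow> matrix_inv A \<in> G"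
  using lat by (auto simp: cocompact_lattice_def)

lemma G_invertible: "A \<in> G \<Longrightarrow> invertible A"
  using orient by (auto simp: orientation_preserving_def invertible_det_nz)

lemma G_inv_both: assumes "A \<in> G" shows "A ** matrix_inv A = mat 1 \<and> matrix_inv A ** A = mat 1"
proof -
  have "\<exists>A'. A ** A' = mat 1 \<and> A' ** A = mat 1" using G_invertible[OF assms] by (simp add: invertible_def)
  thus ?thesis unfolding matrix_inv_def by (rule someI_ex)
qed

lemma G_inv_vec: assumes "A \<in> G" shows "A *v (matrix_inv A *v x) = x" "matrix_inv A *v (A *v x) = x"
  using G_inv_both[OF assms] by (simp_all add: matrix_vector_mul_assoc)

lemma G_inj: "A \<in> G \<Longrightarrow> inj ((*v) A)"
  by (metis G_inv_vec(2) injI)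

lemma image_mult: "(*v) (A ** B) ` S = (*v) A ` ((*v) B ` S)"
  by (auto simp: matrix_vector_mul_assoc[symmetric] image_iff)

definition W :: "nat \<Rightarrow> (real^'n) set" where
  "W i = {s *\<^sub>R (A *v v i) | A s. A \<in> G \<and> (s = 1 \<or> s = -1)}"

lemma v_unit: "i < n \<Longrightarrow> mink t (v i) (v i) = 1"
  using emb by (auto simp: embedded_tg_hypersurface_def)

lemma W_unit: assumes "i < n" "w \<in> W i" shows "mink t w w = 1"
proof -
  obtain A s where A: "A \<in> G" and s: "s = 1 \<or> s = -1" and w: "w = s *\<^sub>R (A *v v i)"
    using assms(2) by (auto simp: W_def)
  have "mink t w w = s * s * mink t (v i) (v i)"
    unfolding w mink_scale_left mink_scale_right G_O[OF A] by simp
  also have "\<dots> = 1" using s v_unit[OF assms(1)] by auto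
  finally show ?thesis .
qed

lemma W_nz: "i < n \<Longrightarrow> w \<in> W i \<Longrightarrow> w \<noteq> 0"
  using W_unit by fastforce

lemma v_W: "v i \<in> W i"
  unfolding W_def by (rule CollectI, rule exI[of _ "mat 1"], rule exI[of _ 1]) (simp add: G_one)

lemma W_neg: assumes "w \<in> W i" shows "- w \<in> W i"
proof -
  obtain A s where A: "A \<in> G" and s: "s = 1 \<or> s = -1" and w: "w = s *\<^sub>R (A *v v i)"
    using assms by (auto simp: W_def)
  have "- w = (- s) *\<^sub>R (A *v v i)" unfolding w by simp
  moreover have "- s = 1 \<or> - s = -1" using s by auto
  ultimately show ?thesis unfolding W_def using A by blast
qed

lemma W_G: assumes AG: "A \<in> G" and "w \<in> W i" shows "A *v w \<in> W i"
proof -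
  obtain B s where B: "B \<in> G" and s: "s = 1 \<or> s = -1" and w: "w = s *\<^sub>R (B *v v i)"
    using assms(2) by (auto simp: W_def)
  have "A *v w = s *\<^sub>R ((A ** B) *v v i)"
    unfolding w by (simp add: matrix_vector_mult_scaleR matrix_vector_mul_assoc)
  moreover have "A ** B \<in> G" by (rule G_mult[OF AG B])
  ultimately show ?thesis unfolding W_def using s by blast
qed

lemma W_image: assumes "A \<in> G" shows "(*v) A ` W i = W i"
proof
  show "(*v) A ` W i \<subseteq> W i" using W_G[OF assms] by auto
  show "W i \<subseteq> (*v) A ` W i"
  proof
    fix w assume "w \<in> W i"
    hence "matrix_inv A *v w \<in> W i" by (rule W_G[OF G_inv[OF assms]])
    moreover have "w = A *v (matrix_inv A *v w)" using G_inv_vec[OF assms] by simp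
    ultimately show "w \<in> (*v) A ` W i" by blast
  qed
qed

lemma hplane_G: assumes "A \<in> G" shows "(*v) A ` hplane t w = hplane t (A *v w)"
proof
  show "(*v) A ` hplane t w \<subseteq> hplane t (A *v w)"
    using assms by (auto simp: hplane_def G_O G_hyp)
  show "hplane t (A *v w) \<subseteq> (*v) A ` hplane t w"
  proof
    fix y assume y: "y \<in> hplane t (A *v w)"
    define x where "x = matrix_inv A *v y"
    have yx: "y = A *v x" unfolding x_def using G_inv_vec[OF assms] by simp
    have "x \<in> hyp t" unfolding x_def using y G_hyp[OF G_inv[OF assms]] by (auto simp: hplane_def)
    moreover have "mink t x w = 0" using y unfolding yx by (simp add: hplane_def G_O[OF assms])
    ultimately show "y \<in> (*v) A ` hplane t w" using yx by (auto simp: hplane_def)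
  qed
qed

lemma W_hplane: assumes "w \<in> W i" shows "\<exists>A\<in>G. hplane t w = (*v) A ` hplane t (v i)"
proof -
  obtain A s where A: "A \<in> G" and s: "s = 1 \<or> s = -1" and w: "w = s *\<^sub>R (A *v v i)"
    using assms by (auto simp: W_def)
  have "hplane t w = hplane t (A *v v i)" using s w by (auto simp: hplane_neg)
  also have "\<dots> = (*v) A ` hplane t (v i)" by (rule hplane_G[OF A, symmetric])
  finally show ?thesis using A by blast
qed

lemma walls_meet:
  assumes i: "i < n" and j: "j < n" and w: "w \<in> W i" and w': "w' \<in> W j"
    and x: "x \<in> hplane t w" and x': "x \<in> hplane t w'"
  shows "i = j \<and> (w' = w \<or> w' = - w)"
proof -
  obtain A where A: "A \<in> G" and hA: "hplane t w = (*v) A ` hplane t (v i)"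
    using W_hplane[OF w] by blast
  obtain B where B: "B \<in> G" and hB: "hplane t w' = (*v) B ` hplane t (v j)"
    using W_hplane[OF w'] by blast
  obtain p where p: "p \<in> hplane t (v i)" and xp: "x = A *v p" using x hA by auto
  obtain p' where p': "p' \<in> hplane t (v j)" and xp': "x = B *v p'" using x' hB by auto
  define C where "C = matrix_inv B ** A"
  have C: "C \<in> G" unfolding C_def by (intro G_mult G_inv A B)
  have Cp: "C *v p = p'"
    unfolding C_def matrix_vector_mul_assoc[symmetric] xp[symmetric] xp' G_inv_vec(2)[OF B] ..
  have meet: "(*v) C ` hplane t (v i) \<inter> hplane t (v j) \<noteq> {}" using p p' Cp by blast
  have ij: "i = j"
  proof (rule ccontr)
    assume "i \<noteq> j"
    hence "disjoint_hypersurfaces t G (v i) (v j)" using disj i j by auto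
    thus False using meet C unfolding disjoint_hypersurfaces_def by auto
  qed
  have e: "embedded_tg_hypersurface t G (v i)" using emb i by simp
  have ec: "(*v) C ` hplane t (v i) = hplane t (v i) \<or> (*v) C ` hplane t (v i) \<inter> hplane t (v i) = {}"
    using e C unfolding embedded_tg_hypersurface_def by blast
  have "(*v) C ` hplane t (v i) = hplane t (v i)" using ec meet ij by auto
  hence "hplane t w' = (*v) B ` ((*v) C ` hplane t (v i))" using hB ij by simp
  also have "\<dots> = (*v) (B ** C) ` hplane t (v i)" by (simp add: image_mult)
  also have "B ** C = A" unfolding C_def
    using G_inv_both[OF B] by (simp add: matrix_mul_assoc)
  finally have "hplane t w' = hplane t w" using hA by simp
  hence "w' = w \<or> w' = - w"
    using plane_normal[OF W_unit[OF i w] W_unit[OF j w']] by simp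
  with ij show ?thesis by simp
qed

lemma G_countable: "countable G"
proof -
  define K where "K = (\<lambda>m::nat. hyp t \<inter> cball (et t) (real m))"
  have cK: "compact (K m)" for m unfolding K_def
    by (rule closed_Int_compact[OF hyp_closed compact_cball])
  have fin: "finite {A\<in>G. (\<lambda>x. A *v x) ` K m \<inter> K m \<noteq> {}}" for m
    using lat cK unfolding cocompact_lattice_def K_def by auto
  have "G \<subseteq> (\<Union>m. {A\<in>G. (\<lambda>x. A *v x) ` K m \<inter> K m \<noteq> {}})"
  proof
    fix A assume A: "A \<in> G"
    obtain m :: nat where m: "dist (et t) (A *v et t) \<le> real m" using real_arch_simple by blast
    have "et t \<in> K m" unfolding K_def using et_hyp by simp
    moreover have "A *v et t \<in> K m" unfolding K_def using m G_hyp[OF A et_hyp] by simp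
    ultimately show "A \<in> (\<Union>m. {A\<in>G. (\<lambda>x. A *v x) ` K m \<inter> K m \<noteq> {}})" using A by blast
  qed
  moreover have "countable (\<Union>m. {A\<in>G. (\<lambda>x. A *v x) ` K m \<inter> K m \<noteq> {}})"
    using fin by (intro countable_UN) (auto intro: countable_finite)
  ultimately show ?thesis by (rule countable_subset)
qed

end

definition seg :: "'n::finite \<Rightarrow> real^'n \<Rightarrow> real^'n \<Rightarrow> real \<Rightarrow> real^'n" where
  "seg t x y s = nrm t ((1-s) *\<^sub>R x + s *\<^sub>R y)"

lemma seg_neg:
  assumes "x \<in> hyp t" "y \<in> hyp t" "s \<in> {0..1}"
  shows "mink t ((1-s) *\<^sub>R x + s *\<^sub>R y) ((1-s) *\<^sub>R x + s *\<^sub>R y) < 0"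
  using seg_hyp(1)[of x t y s] assms by force

lemma seg_in_hyp:
  assumes "x \<in> hyp t" "y \<in> hyp t" "s \<in> {0..1}"
  shows "seg t x y s \<in> hyp t"
  unfolding seg_def using assms seg_hyp(2)[of x t y s] seg_neg[OF assms]
  by (intro nrm_hyp) auto

lemma seg_sgn:
  assumes "x \<in> hyp t" "y \<in> hyp t" "s \<in> {0..1}"
  shows "sgn (mink t (seg t x y s) w) = sgn ((1-s) * mink t x w + s * mink t y w)"
  unfolding seg_def sgn_mink_nrm[OF seg_neg[OF assms]]
  by (simp add: mink_add_left mink_scale_left)

lemma seg_zero:
  assumes "x \<in> hyp t" "y \<in> hyp t" "s \<in> {0..1}"
  shows "mink t (seg t x y s) w = 0 \<longleftrightarrow> (1-s) * mink t x w + s * mink t y w = 0"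
  using seg_sgn[OF assms, of w] by (metis sgn_0_0 sgn_zero_iff)

lemma continuous_on_nrm:
  assumes "continuous_on S g" "\<And>x. x \<in> S \<Longrightarrow> mink t (g x) (g x) < 0"
  shows "continuous_on S (\<lambda>x. nrm t (g x))"
  unfolding nrm_def
  apply (intro continuous_intros assms)
  using assms(2) by force+

lemma continuous_on_seg:
  assumes "x \<in> hyp t" "y \<in> hyp t"
  shows "continuous_on {0..1} (seg t x y)"
  unfolding seg_def
  by (rule continuous_on_nrm) (intro continuous_intros, use seg_neg[OF assms] in blast)

lemma compact_seg:
  assumes "x \<in> hyp t" "y \<in> hyp t"
  shows "compact (seg t x y ` {0..1})" "seg t x y ` {0..1} \<subseteq> hyp t"
  using compact_continuous_image[OF continuous_on_seg[OF assms] compact_Icc]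
    seg_in_hyp[OF assms] by auto

lemma hplane_closed: "closed (hplane t w)"
proof -
  have "hplane t w = hyp t \<inter> {x. mink t x w = 0}" by (auto simp: hplane_def)
  moreover have "closed {x. mink t x w = (0::real)}"
  proof -
    have c: "continuous_on UNIV (\<lambda>x::real^'a. mink t x w)"
      by (rule continuous_on_mink[OF continuous_on_id continuous_on_const])
    show ?thesis by (rule closed_Collect_eq[OF c continuous_on_const])
  qed
  ultimately show ?thesis using hyp_closed by auto
qed

context setting
begin

definition U :: "nat \<Rightarrow> (real^'n) set" where
  "U i = (\<Union>A\<in>G. (*v) A ` hplane t (v i))"

lemma U_closed: "i < n \<Longrightarrow> closed (U i)"
  using emb unfolding U_def embedded_tg_hypersurface_def by blast

lemma U_iff: "x \<in> U i \<longleftrightarrow> (\<exists>w\<in>W i. x \<in> hplane t w)"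
proof
  assume "x \<in> U i"
  then obtain A where A: "A \<in> G" and x: "x \<in> (*v) A ` hplane t (v i)" unfolding U_def by blast
  have "A *v v i \<in> W i" by (rule W_G[OF A v_W])
  moreover have "x \<in> hplane t (A *v v i)" using x hplane_G[OF A] by simp
  ultimately show "\<exists>w\<in>W i. x \<in> hplane t w" by blast
next
  assume "\<exists>w\<in>W i. x \<in> hplane t w"
  then obtain w where w: "w \<in> W i" and x: "x \<in> hplane t w" by blast
  obtain A where A: "A \<in> G" and h: "hplane t w = (*v) A ` hplane t (v i)"
    using W_hplane[OF w] by blast
  show "x \<in> U i" unfolding U_def using A h x by blast
qed

definition acc :: "nat \<Rightarrow> real^'n \<Rightarrow> bool" where
  "acc i q \<longleftrightarrow> (\<forall>e>0. \<exists>w\<in>W i. w \<noteq> q \<and> w \<noteq> - q \<and> norm (w - q) < e)"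

lemma acc_neg: assumes "acc i q" shows "acc i (- q)"
  unfolding acc_def
proof (intro allI impI)
  fix e :: real assume "e > 0"
  then obtain w where "w \<in> W i" "w \<noteq> q" "w \<noteq> - q" "norm (w - q) < e"
    using assms unfolding acc_def by blast
  moreover have "norm (- w - (- q)) = norm (w - q)" by (metis minus_diff_eq norm_minus_cancel diff_minus_eq_add uminus_add_conv_diff)
  ultimately show "\<exists>w\<in>W i. w \<noteq> - q \<and> w \<noteq> - (- q) \<and> norm (w - (- q)) < e"
    using W_neg by (intro bexI[of _ "- w"]) auto
qed

lemma acc_G: assumes A: "A \<in> G" and a: "acc i q" shows "acc i (A *v q)"
  unfolding acc_def
proof (intro allI impI)
  fix e :: real assume e: "e > 0"
  obtain C where C: "C > 0" "\<And>x. norm (A *v x) \<le> norm x * C"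
    using bounded_linear.pos_bounded[OF matrix_vector_mul_bounded_linear[of A]] by blast
  obtain w where w: "w \<in> W i" "w \<noteq> q" "w \<noteq> - q" "norm (w - q) < e / C"
    using a e C unfolding acc_def by (meson divide_pos_pos)
  have "norm (A *v w - A *v q) = norm (A *v (w - q))" by (simp add: matrix_vector_mult_diff_distrib)
  also have "\<dots> \<le> norm (w - q) * C" by (rule C(2))
  also have "\<dots> < e" using w(4) C(1) by (simp add: pos_less_divide_eq)
  finally have "norm (A *v w - A *v q) < e" .
  moreover have "A *v w \<noteq> A *v q" using w(2) G_inj[OF A] by (auto dest: injD)
  moreover have "A *v w \<noteq> - (A *v q)"
  proof
    assume "A *v w = - (A *v q)"
    moreover have "A *v (- q) = - (A *v q)" by (rule linear_neg[OF matrix_vector_mul_linear])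
    ultimately have "A *v w = A *v (- q)" by simp
    thus False using w(3) G_inj[OF A] by (auto dest: injD)
  qed
  ultimately show "\<exists>w\<in>W i. w \<noteq> A *v q \<and> w \<noteq> - (A *v q) \<and> norm (w - A *v q) < e"
    using W_G[OF A w(1)] by blast
qed

lemma acc_all:
  assumes q: "q \<in> W i" and a: "acc i q" and q': "q' \<in> W i"
  shows "acc i q'"
proof -
  obtain A s where A: "A \<in> G" and s: "s = 1 \<or> s = -1" and qe: "q = s *\<^sub>R (A *v v i)"
    using q by (auto simp: W_def)
  obtain B s' where B: "B \<in> G" and s': "s' = 1 \<or> s' = -1" and qe': "q' = s' *\<^sub>R (B *v v i)"
    using q' by (auto simp: W_def)
  have "acc i (A *v v i)"
  proof (cases "s = 1")
    case True thus ?thesis using a qe by simp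
  next
    case False hence "q = - (A *v v i)" using s qe by simp
    thus ?thesis using acc_neg[OF a] by simp
  qed
  hence "acc i (matrix_inv A *v (A *v v i))" by (rule acc_G[OF G_inv[OF A]])
  hence "acc i (v i)" using G_inv_vec(2)[OF A] by simp
  hence "acc i (B *v v i)" by (rule acc_G[OF B])
  show ?thesis
  proof (cases "s' = 1")
    case True thus ?thesis using \<open>acc i (B *v v i)\<close> qe' by simp
  next
    case False hence "q' = - (B *v v i)" using s' qe' by simp
    thus ?thesis using acc_neg[OF \<open>acc i (B *v v i)\<close>] by simp
  qed
qed

lemma acc_points:
  assumes i: "i < n" and q: "q \<in> W i" and a: "acc i q" and r: "r \<in> hplane t q" and e: "e > 0"
  shows "\<exists>z\<in>U i - hplane t q. dist z r < e"
proof -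
  have rh: "r \<in> hyp t" and rq: "mink t r q = 0" using r by (auto simp: hplane_def)
  have lim: "((\<lambda>w. pp t r w) \<longlongrightarrow> r) (at q)"
    by (rule tendsto_pp[OF rh rq tendsto_ident_at])
  obtain d where d: "d > 0" and dd: "\<forall>x. x \<noteq> q \<and> dist x q < d \<longrightarrow> dist (pp t r x) r < e"
    using metric_LIM_D[OF lim e] by (elim exE conjE) (rule that)
  have "\<exists>w\<in>W i. w \<noteq> q \<and> w \<noteq> - q \<and> norm (w - q) < d" using a d unfolding acc_def by simp
  then obtain w where w: "w \<in> W i" "w \<noteq> q" "w \<noteq> - q" "norm (w - q) < d" by (elim bexE conjE) (rule that)
  have wu: "mink t w w = 1" by (rule W_unit[OF i w(1)])
  have zin: "pp t r w \<in> hplane t w" using pp_props[OF rh wu] by (simp add: hplane_def)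
  have zU: "pp t r w \<in> U i" unfolding U_iff using w(1) zin by (rule bexI[rotated])
  have zq: "pp t r w \<notin> hplane t q"
  proof
    assume "pp t r w \<in> hplane t q"
    hence "q = w \<or> q = - w" using walls_meet[OF i i w(1) q zin] by simp
    thus False using w(2,3) by auto
  qed
  have "dist w q < d" using w(4) by (simp add: dist_norm)
  hence "dist (pp t r w) r < e" using dd w(2) by simp
  thus ?thesis using zU zq by blast
qed

lemma not_acc: assumes i: "i < n" shows "\<not> acc i (v i)"
proof
  assume a: "acc i (v i)"
  define S where "S = U i"
  define GG where "GG = (\<lambda>A. S - (*v) A ` hplane t (v i)) ` G"
  have cS: "closed S" unfolding S_def by (rule U_closed[OF i])
  have cGG: "countable GG" unfolding GG_def using G_countable by simp
  have props: "openin (top_of_set S) T \<and> S \<subseteq> closure T" if T: "T \<in> GG" for T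
  proof -
    obtain A where A: "A \<in> G" and TA: "T = S - (*v) A ` hplane t (v i)"
      using T unfolding GG_def by blast
    have hA: "(*v) A ` hplane t (v i) = hplane t (A *v v i)" by (rule hplane_G[OF A])
    have qW: "A *v v i \<in> W i" by (rule W_G[OF A v_W])
    have "openin (top_of_set S) (S - S \<inter> hplane t (A *v v i))"
      by (intro openin_diff openin_subtopology_self closedin_closed_Int hplane_closed)
    moreover have "S - S \<inter> hplane t (A *v v i) = T" unfolding TA hA by blast
    ultimately have "openin (top_of_set S) T" by simp
    moreover have "S \<subseteq> closure T"
    proof
      fix r assume rS: "r \<in> S"
      show "r \<in> closure T"
      proof (cases "r \<in> hplane t (A *v v i)")
        case False thus ?thesis using rS TA hA closure_subset by fastforce
      next
        case True
        have aq: "acc i (A *v v i)" by (rule acc_G[OF A a])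
        show ?thesis unfolding closure_approachable
        proof (intro allI impI)
          fix e :: real assume "e > 0"
          from acc_points[OF i qW aq True this] obtain z where
            "z \<in> U i - hplane t (A *v v i)" "dist z r < e" by blast
          thus "\<exists>y\<in>T. dist y r < e" unfolding TA hA S_def by blast
        qed
      qed
    qed
    ultimately show ?thesis by blast
  qed
  have "S \<subseteq> closure (\<Inter>GG)" by (rule Baire[OF cS cGG props]) auto
  moreover have "\<Inter>GG = {}"
  proof -
    have "\<Inter>GG \<subseteq> S - (*v) (mat 1) ` hplane t (v i)" unfolding GG_def using G_one by blast
    moreover have "\<Inter>GG \<subseteq> S" unfolding GG_def using G_one by blast
    moreover have "x \<notin> \<Inter>GG" if xS: "x \<in> S" for x
    proof -
      obtain A where A: "A \<in> G" "x \<in> (*v) A ` hplane t (v i)" using xS unfolding S_def U_def by blast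
      thus ?thesis unfolding GG_def by blast
    qed
    ultimately show ?thesis by blast
  qed
  moreover have "pp t (et t) (v i) \<in> S"
  proof -
    have "pp t (et t) (v i) \<in> hplane t (v i)" by (rule hplane_ne[OF v_unit[OF i]])
    thus ?thesis unfolding S_def U_iff using v_W by blast
  qed
  ultimately show False by simp
qed

end

context setting
begin

lemma pick_index:
  assumes "inj (g :: nat \<Rightarrow> real^'n)"
  shows "\<exists>k\<ge>N. g k \<noteq> q \<and> g k \<noteq> - q"
proof -
  have "finite (g -` {q, - q})" by (rule finite_vimageI) (use assms in auto)
  then obtain m where m: "g -` {q, - q} \<subseteq> {..<m}" using finite_nat_bounded by blast
  have "max N m \<notin> g -` {q, - q}" using m by auto
  thus ?thesis by (intro exI[of _ "max N m"]) auto
qed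

lemma LF:
  assumes i: "i < n" and K: "compact K" "K \<subseteq> hyp t"
  shows "finite {w \<in> W i. \<exists>x\<in>K. mink t x w = 0}"
proof (rule ccontr)
  define S where "S = {w \<in> W i. \<exists>x\<in>K. mink t x w = 0}"
  assume "infinite {w \<in> W i. \<exists>x\<in>K. mink t x w = 0}"
  hence inf: "infinite S" unfolding S_def .
  obtain f :: "nat \<Rightarrow> real^'n" where finj: "inj f" and fS: "range f \<subseteq> S"
    using infinite_countable_subset[OF inf] by blast
  have fW: "f k \<in> W i" for k using fS unfolding S_def by auto
  have "\<forall>k. \<exists>x. x \<in> K \<and> mink t x (f k) = 0" using fS unfolding S_def by blast
  then obtain p where pK: "\<And>k. p k \<in> K" and pf: "\<And>k. mink t (p k) (f k) = 0" by metis
  have ph: "p k \<in> hyp t" for k using pK K(2) by auto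
  obtain B where B: "\<And>x. x \<in> K \<Longrightarrow> norm x \<le> B"
    using compact_imp_bounded[OF K(1)] unfolding bounded_iff by blast
  have fb: "norm (f k) \<le> 2 * B" for k
  proof -
    have "norm (f k) \<le> 2 * norm (p k)" by (rule norm_bound[OF ph pf W_unit[OF i fW]])
    also have "\<dots> \<le> 2 * B" using B[OF pK] by simp
    finally show ?thesis .
  qed
  define g where "g = (\<lambda>k. (p k, f k))"
  have cmp: "compact (K \<times> cball (0::real^'n) (2*B))" by (rule compact_Times[OF K(1) compact_cball])
  have gin: "\<forall>k. g k \<in> K \<times> cball (0::real^'n) (2*B)" using pK fb by (auto simp: g_def)
  obtain l r where l: "l \<in> K \<times> cball (0::real^'n) (2*B)" and r: "strict_mono r" and lim: "(g \<circ> r) \<longlonglongrightarrow> l"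
    using seq_compactE[OF compact_imp_seq_compact[OF cmp] gin] by blast
  obtain p0 w0 where l0: "l = (p0, w0)" by (cases l)
  have pl: "(\<lambda>k. p (r k)) \<longlonglongrightarrow> p0" using tendsto_fst[OF lim] by (simp add: l0 g_def o_def)
  have wl: "(\<lambda>k. f (r k)) \<longlonglongrightarrow> w0" using tendsto_snd[OF lim] by (simp add: l0 g_def o_def)
  have p0K: "p0 \<in> K" using l l0 by simp
  hence p0h: "p0 \<in> hyp t" using K(2) by auto
  have "(\<lambda>k. mink t (p (r k)) (f (r k))) \<longlonglongrightarrow> mink t p0 w0" by (rule tendsto_mink[OF pl wl])
  hence p0w0: "mink t p0 w0 = 0" using pf by (simp add: LIMSEQ_const_iff)
  have "(\<lambda>k. mink t (f (r k)) (f (r k))) \<longlonglongrightarrow> mink t w0 w0" by (rule tendsto_mink[OF wl wl])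
  hence w0w0: "mink t w0 w0 = 1" using W_unit[OF i fW] by (simp add: LIMSEQ_const_iff)
  have "p (r k) \<in> U i" for k unfolding U_iff using fW ph pf by (auto simp: hplane_def)
  hence "p0 \<in> U i" using closed_sequentially[OF U_closed[OF i] _ pl] by blast
  then obtain q where qW: "q \<in> W i" and p0q: "p0 \<in> hplane t q" unfolding U_iff by blast
  have injfr: "inj (\<lambda>k. f (r k))"
  proof (rule injI)
    fix x y assume "f (r x) = f (r y)"
    hence "r x = r y" using finj by (simp add: inj_eq)
    thus "x = y" using strict_mono_eq[OF r] by simp
  qed
  show False
  proof (cases "w0 = q \<or> w0 = - q")
    case True
    have w0W: "w0 \<in> W i" using True qW W_neg by auto
    have "acc i w0" unfolding acc_def
    proof (intro allI impI)
      fix e :: real assume e: "e > 0"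
      obtain N where N: "\<And>k. k \<ge> N \<Longrightarrow> norm (f (r k) - w0) < e" using LIMSEQ_D[OF wl e] by blast
      obtain k where k: "k \<ge> N" "f (r k) \<noteq> q" "f (r k) \<noteq> - q" using pick_index[OF injfr] by blast
      have "f (r k) \<noteq> w0" "f (r k) \<noteq> - w0" using k True by auto
      thus "\<exists>w\<in>W i. w \<noteq> w0 \<and> w \<noteq> - w0 \<and> norm (w - w0) < e" using N[OF k(1)] fW by blast
    qed
    hence "acc i (v i)" using acc_all[OF w0W _ v_W] by blast
    thus False using not_acc[OF i] by simp
  next
    case False
    have qq: "mink t q q = 1" by (rule W_unit[OF i qW])
    have p0q0: "mink t p0 q = 0" using p0q by (simp add: hplane_def)
    define c where "c = mink t w0 q"
    define e' where "e' = w0 - c *\<^sub>R q"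
    have e'q: "mink t e' q = 0" unfolding e'_def mink_diff_left mink_scale_left qq c_def by simp
    have e'p: "mink t e' p0 = 0"
      unfolding e'_def mink_diff_left mink_scale_left using p0w0 p0q0 by (simp add: mink_sym)
    have e'ne: "e' \<noteq> 0"
    proof
      assume "e' = 0"
      hence w0e: "w0 = c *\<^sub>R q" unfolding e'_def by simp
      hence "c * c = 1" using w0w0 qq by (simp add: mink_scale_left mink_scale_right)
      hence "c = 1 \<or> c = -1" by (metis abs_if mult_cancel_right2 mult_minus_left square_eq_1_iff)
      thus False using w0e False by auto
    qed
    have pos: "mink t e' e' > 0" by (rule spacelike[OF p0h e'ne]) (simp add: mink_sym e'p)
    have e'w: "mink t e' w0 = mink t e' e'"
    proof -
      have "mink t e' (w0 - c *\<^sub>R q) = mink t e' w0 - c * mink t e' q"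
        by (simp only: mink_diff_right mink_scale_right)
      hence "mink t e' e' = mink t e' w0 - c * mink t e' q" by (simp only: e'_def[symmetric])
      thus ?thesis using e'q by simp
    qed
    define b where "b = sqrt (mink t e' e')"
    have b: "b > 0" unfolding b_def using pos by simp
    define e where "e = (1 / b) *\<^sub>R e'"
    have ee: "mink t e e = 1" using pos
      unfolding e_def b_def mink_scale_left mink_scale_right by (simp add: field_simps)
    have ep: "mink t e p0 = 0" unfolding e_def mink_scale_left e'p by simp
    have eq: "mink t e q = 0" unfolding e_def mink_scale_left e'q by simp
    have ew: "mink t e w0 = b"
      unfolding e_def mink_scale_left e'w using pos by (simp add: b_def field_simps real_sqrt_mult[symmetric])
    define qp where "qp = cosh 1 *\<^sub>R p0 + sinh 1 *\<^sub>R e"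
    define qm where "qm = cosh (-1) *\<^sub>R p0 + sinh (-1) *\<^sub>R e"
    have qph: "qp \<in> hyp t" unfolding qp_def by (rule geod_hyp[OF p0h ep ee])
    have qmh: "qm \<in> hyp t" unfolding qm_def by (rule geod_hyp[OF p0h ep ee])
    have qpq: "mink t qp q = 0" unfolding qp_def mink_geod p0q0 eq by simp
    have qmq: "mink t qm q = 0" unfolding qm_def mink_geod p0q0 eq by simp
    have qpw: "mink t qp w0 > 0" unfolding qp_def mink_geod p0w0 ew using b by simp
    have qmw: "mink t qm w0 < 0" unfolding qm_def mink_geod p0w0 ew using b by simp
    have "(\<lambda>k. mink t qp (f (r k))) \<longlonglongrightarrow> mink t qp w0" by (rule tendsto_mink[OF tendsto_const wl])
    hence ev1: "eventually (\<lambda>k. mink t qp (f (r k)) > 0) sequentially"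
      using order_tendstoD(1)[OF _ qpw] by blast
    have "(\<lambda>k. mink t qm (f (r k))) \<longlonglongrightarrow> mink t qm w0" by (rule tendsto_mink[OF tendsto_const wl])
    hence ev2: "eventually (\<lambda>k. mink t qm (f (r k)) < 0) sequentially"
      using order_tendstoD(2)[OF _ qmw] by blast
    obtain N where N: "\<And>k. k \<ge> N \<Longrightarrow> mink t qp (f (r k)) > 0 \<and> mink t qm (f (r k)) < 0"
      using eventually_conj[OF ev1 ev2] unfolding eventually_sequentially by blast
    obtain k where k: "k \<ge> N" "f (r k) \<noteq> q" "f (r k) \<noteq> - q" using pick_index[OF injfr] by blast
    define w where "w = f (r k)"
    have "sgn (mink t qm w) \<noteq> sgn (mink t qp w)" using N[OF k(1)] unfolding w_def by simp
    then obtain s where s: "s \<in> {0..1}" and s0: "(1 - s) * mink t qm w + s * mink t qp w = 0"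
      using ivt_lin by blast
    define z where "z = seg t qm qp s"
    have zh: "z \<in> hyp t" unfolding z_def by (rule seg_in_hyp[OF qmh qph s])
    have zw: "mink t z w = 0" unfolding z_def seg_zero[OF qmh qph s] using s0 .
    have zq: "mink t z q = 0" unfolding z_def seg_zero[OF qmh qph s] using qmq qpq by simp
    have "z \<in> hplane t q" "z \<in> hplane t w" using zh zw zq by (auto simp: hplane_def)
    hence "w = q \<or> w = - q" using walls_meet[OF i i qW fW[of "r k"]] unfolding w_def by blast
    thus False using k unfolding w_def by blast
  qed
qed

end

definition trm :: "'n::finite \<Rightarrow> real^'n \<Rightarrow> real^'n \<Rightarrow> real^'n \<Rightarrow> real^'n" where
  "trm t x y w = ((sgn (mink t y w) - sgn (mink t x w)) / 2) *\<^sub>R w"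

lemma trm_add: "trm t x z w = trm t x y w + trm t y z w"
  unfolding trm_def by (simp add: scaleR_left_distrib[symmetric] diff_divide_distrib)

context setting
begin

definition D :: "nat \<Rightarrow> real^'n \<Rightarrow> real^'n \<Rightarrow> (real^'n) set" where
  "D i x y = {w \<in> W i. sgn (mink t x w) \<noteq> sgn (mink t y w)}"

definition om :: "nat \<Rightarrow> real^'n \<Rightarrow> real^'n \<Rightarrow> real^'n" where
  "om i x y = (\<Sum>w\<in>D i x y. trm t x y w)"

lemma D_sub: assumes x: "x \<in> hyp t" and y: "y \<in> hyp t"
  shows "D i x y \<subseteq> {w \<in> W i. \<exists>z\<in>seg t x y ` {0..1}. mink t z w = 0}"
proof
  fix w assume w: "w \<in> D i x y"
  hence wW: "w \<in> W i" and sg: "sgn (mink t x w) \<noteq> sgn (mink t y w)" by (auto simp: D_def)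
  obtain s where s: "s \<in> {0..1}" and s0: "(1 - s) * mink t x w + s * mink t y w = 0"
    using ivt_lin[OF sg] by blast
  have "mink t (seg t x y s) w = 0" unfolding seg_zero[OF x y s] by (rule s0)
  thus "w \<in> {w \<in> W i. \<exists>z\<in>seg t x y ` {0..1}. mink t z w = 0}" using wW s by blast
qed

lemma D_finite: assumes i: "i < n" and x: "x \<in> hyp t" and y: "y \<in> hyp t"
  shows "finite (D i x y)"
  by (rule finite_subset[OF D_sub[OF x y] LF[OF i compact_seg[OF x y]]])

lemma trm_zero: "w \<notin> D i x y \<Longrightarrow> w \<in> W i \<Longrightarrow> trm t x y w = 0"
  unfolding D_def trm_def by auto

lemma om_sup:
  assumes i: "i < n" and x: "x \<in> hyp t" and y: "y \<in> hyp t"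
    and S: "finite S" "D i x y \<subseteq> S" "S \<subseteq> W i"
  shows "om i x y = (\<Sum>w\<in>S. trm t x y w)"
  unfolding om_def
  by (rule sum.mono_neutral_left[OF S(1) S(2)]) (use S(3) trm_zero in blast)

lemma om_trans:
  assumes i: "i < n" and x: "x \<in> hyp t" and y: "y \<in> hyp t" and z: "z \<in> hyp t"
  shows "om i x z = om i x y + om i y z"
proof -
  define S where "S = D i x y \<union> D i y z \<union> D i x z"
  have fS: "finite S" unfolding S_def using D_finite i x y z by auto
  have SW: "S \<subseteq> W i" unfolding S_def D_def by auto
  have "om i x z = (\<Sum>w\<in>S. trm t x z w)" by (rule om_sup[OF i x z fS _ SW]) (auto simp: S_def)
  also have "\<dots> = (\<Sum>w\<in>S. trm t x y w) + (\<Sum>w\<in>S. trm t y z w)"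
    unfolding sum.distrib[symmetric] by (rule sum.cong) (auto intro: trm_add)
  also have "(\<Sum>w\<in>S. trm t x y w) = om i x y" by (rule om_sup[symmetric, OF i x y fS _ SW]) (auto simp: S_def)
  also have "(\<Sum>w\<in>S. trm t y z w) = om i y z" by (rule om_sup[symmetric, OF i y z fS _ SW]) (auto simp: S_def)
  finally show ?thesis .
qed

lemma D_G: assumes A: "A \<in> G" shows "D i (A *v x) (A *v y) = (*v) A ` D i x y"
proof
  show "D i (A *v x) (A *v y) \<subseteq> (*v) A ` D i x y"
  proof
    fix w assume w: "w \<in> D i (A *v x) (A *v y)"
    define w' where "w' = matrix_inv A *v w"
    have ww': "w = A *v w'" unfolding w'_def using G_inv_vec[OF A] by simp
    have "w' \<in> W i" unfolding w'_def using w W_G[OF G_inv[OF A]] by (auto simp: D_def)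
    moreover have "sgn (mink t x w') \<noteq> sgn (mink t y w')"
      using w unfolding ww' D_def by (simp add: G_O[OF A])
    ultimately have "w' \<in> D i x y" unfolding D_def by simp
    thus "w \<in> (*v) A ` D i x y" using ww' by blast
  qed
  show "(*v) A ` D i x y \<subseteq> D i (A *v x) (A *v y)"
    using W_G[OF A] by (auto simp: D_def G_O[OF A])
qed

lemma om_G:
  assumes i: "i < n" and A: "A \<in> G" and x: "x \<in> hyp t" and y: "y \<in> hyp t"
  shows "om i (A *v x) (A *v y) = A *v om i x y"
proof -
  have "om i (A *v x) (A *v y) = (\<Sum>w\<in>(*v) A ` D i x y. trm t (A *v x) (A *v y) w)"
    unfolding om_def D_G[OF A] ..
  also have "\<dots> = (\<Sum>w\<in>D i x y. trm t (A *v x) (A *v y) (A *v w))"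
    by (rule sum.reindex[unfolded o_def]) (use G_inj[OF A] in \<open>auto simp: inj_on_def inj_def\<close>)
  also have "\<dots> = (\<Sum>w\<in>D i x y. A *v trm t x y w)"
    by (rule sum.cong) (simp_all add: trm_def G_O[OF A] matrix_vector_mult_scaleR)
  also have "\<dots> = A *v om i x y"
    unfolding om_def by (rule linear_sum[OF matrix_vector_mul_linear, symmetric])
  finally show ?thesis .
qed

definition x0 :: "real^'n" where "x0 = et t"

lemma x0_hyp: "x0 \<in> hyp t" unfolding x0_def by (rule et_hyp)

definition tau :: "nat \<Rightarrow> real^'n^'n \<Rightarrow> real^'n" where
  "tau i A = om i x0 (A *v x0)"

lemma tau_cocycle: assumes i: "i < n" shows "cocycle G (tau i)"
  unfolding cocycle_def
proof (intro ballI)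
  fix A B assume A: "A \<in> G" and B: "B \<in> G"
  have Ax: "A *v x0 \<in> hyp t" by (rule G_hyp[OF A x0_hyp])
  have Bx: "B *v x0 \<in> hyp t" by (rule G_hyp[OF B x0_hyp])
  have ABx: "A *v (B *v x0) \<in> hyp t" by (rule G_hyp[OF A Bx])
  have "tau i (A ** B) = om i x0 (A *v (B *v x0))"
    unfolding tau_def by (simp add: matrix_vector_mul_assoc)
  also have "\<dots> = om i x0 (A *v x0) + om i (A *v x0) (A *v (B *v x0))"
    by (rule om_trans[OF i x0_hyp Ax ABx])
  also have "om i (A *v x0) (A *v (B *v x0)) = A *v om i x0 (B *v x0)"
    by (rule om_G[OF i A x0_hyp Bx])
  finally show "tau i (A ** B) = tau i A + A *v tau i B" unfolding tau_def .
qed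

end

locale indep = setting t G n v
  for t :: "'n::finite" and G n v +
  fixes c :: "nat \<Rightarrow> real" and u :: "real^'n"
  assumes cob: "\<forall>A\<in>G. (\<Sum>i<n. c i *\<^sub>R tau i A) = A *v u - u"
begin

definition Om :: "real^'n \<Rightarrow> real^'n \<Rightarrow> real^'n" where
  "Om x y = (\<Sum>i<n. c i *\<^sub>R om i x y)"

lemma Om_trans:
  assumes x: "x \<in> hyp t" and y: "y \<in> hyp t" and z: "z \<in> hyp t"
  shows "Om x z = Om x y + Om y z"
  unfolding Om_def sum.distrib[symmetric]
  by (rule sum.cong) (simp_all add: om_trans[OF _ x y z] scaleR_right_distrib)

lemma Om_G:
  assumes A: "A \<in> G" and x: "x \<in> hyp t" and y: "y \<in> hyp t"
  shows "Om (A *v x) (A *v y) = A *v Om x y"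
proof -
  have "Om (A *v x) (A *v y) = (\<Sum>i<n. A *v (c i *\<^sub>R om i x y))"
    unfolding Om_def by (rule sum.cong) (simp_all add: om_G[OF _ A x y] matrix_vector_mult_scaleR)
  also have "\<dots> = A *v Om x y"
    unfolding Om_def by (rule linear_sum[OF matrix_vector_mul_linear, symmetric])
  finally show ?thesis .
qed

definition F :: "real^'n \<Rightarrow> real^'n" where "F y = u + Om x0 y"

lemma F_G: assumes A: "A \<in> G" and y: "y \<in> hyp t" shows "F (A *v y) = A *v F y"
proof -
  have Ax: "A *v x0 \<in> hyp t" by (rule G_hyp[OF A x0_hyp])
  have Ay: "A *v y \<in> hyp t" by (rule G_hyp[OF A y])
  have "Om x0 (A *v x0) = A *v u - u" using cob A unfolding Om_def tau_def by simp
  moreover have "Om x0 (A *v y) = Om x0 (A *v x0) + Om (A *v x0) (A *v y)"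
    by (rule Om_trans[OF x0_hyp Ax Ay])
  moreover have "Om (A *v x0) (A *v y) = A *v Om x0 y" by (rule Om_G[OF A x0_hyp y])
  ultimately have "Om x0 (A *v y) = A *v u - u + A *v Om x0 y" by simp
  thus ?thesis unfolding F_def by (simp add: matrix_vector_right_distrib)
qed

lemma trm_norm: "norm (trm t x y w) \<le> norm w"
proof -
  have "\<bar>(sgn (mink t y w) - sgn (mink t x w)) / 2\<bar> \<le> 1"
    by (auto simp: sgn_if)
  hence "\<bar>(sgn (mink t y w) - sgn (mink t x w)) / 2\<bar> * norm w \<le> 1 * norm w"
    by (rule mult_right_mono) simp
  thus ?thesis unfolding trm_def by simp
qed

lemma F_bounded_K:
  assumes K: "compact K" "K \<subseteq> hyp t"
  shows "\<exists>C. \<forall>k\<in>K. norm (F k) \<le> C"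
proof -
  define K2 where "K2 = (\<lambda>p. seg t x0 (snd p) (fst p)) ` ({0..1} \<times> K)"
  have cont: "continuous_on ({0..1} \<times> K) (\<lambda>p. seg t x0 (snd p) (fst p))"
    unfolding seg_def
  proof (rule continuous_on_nrm)
    have c1: "continuous_on ({0..1::real} \<times> K) fst" by (rule continuous_on_fst[OF continuous_on_id])
    have c2: "continuous_on ({0..1::real} \<times> K) snd" by (rule continuous_on_snd[OF continuous_on_id])
    have c3: "continuous_on ({0..1::real} \<times> K) (\<lambda>p. 1 - fst p)"
      by (rule continuous_on_diff[OF continuous_on_const c1])
    have c4: "continuous_on ({0..1::real} \<times> K) (\<lambda>p. (1 - fst p) *\<^sub>R x0)"
      by (rule continuous_on_scaleR[OF c3 continuous_on_const])
    have c5: "continuous_on ({0..1::real} \<times> K) (\<lambda>p. fst p *\<^sub>R snd p)"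
      by (rule continuous_on_scaleR[OF c1 c2])
    show "continuous_on ({0..1} \<times> K) (\<lambda>p. (1 - fst p) *\<^sub>R x0 + fst p *\<^sub>R snd p)"
      by (rule continuous_on_add[OF c4 c5])
    fix p assume "p \<in> {0..1::real} \<times> K"
    hence "fst p \<in> {0..1}" "snd p \<in> hyp t" using K(2) by auto
    thus "mink t ((1 - fst p) *\<^sub>R x0 + fst p *\<^sub>R snd p) ((1 - fst p) *\<^sub>R x0 + fst p *\<^sub>R snd p) < 0"
      using seg_neg[OF x0_hyp] by blast
  qed
  have cK2: "compact K2" unfolding K2_def
    by (rule compact_continuous_image[OF cont compact_Times[OF compact_Icc K(1)]])
  have K2h: "K2 \<subseteq> hyp t" unfolding K2_def
  proof (rule image_subsetI)
    fix p assume "p \<in> {0..1::real} \<times> K"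
    hence "fst p \<in> {0..1}" "snd p \<in> hyp t" using K(2) by auto
    thus "seg t x0 (snd p) (fst p) \<in> hyp t" by (rule seg_in_hyp[OF x0_hyp, rotated])
  qed
  define T where "T = (\<lambda>i. {w \<in> W i. \<exists>z\<in>K2. mink t z w = 0})"
  have fT: "finite (T i)" if "i < n" for i unfolding T_def by (rule LF[OF that cK2 K2h])
  define C where "C = norm u + (\<Sum>i<n. \<bar>c i\<bar> * (\<Sum>w\<in>T i. norm w))"
  have "norm (F k) \<le> C" if k: "k \<in> K" for k
  proof -
    have kh: "k \<in> hyp t" using k K(2) by auto
    have DT: "D i x0 k \<subseteq> T i" for i
    proof -
      have "seg t x0 k ` {0..1} \<subseteq> K2"
      proof (rule image_subsetI)
        fix s :: real assume "s \<in> {0..1}"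
        thus "seg t x0 k s \<in> K2" unfolding K2_def using k by (intro image_eqI[of _ _ "(s, k)"]) auto
      qed
      thus ?thesis using D_sub[OF x0_hyp kh, of i] unfolding T_def by blast
    qed
    have om_le: "norm (om i x0 k) \<le> (\<Sum>w\<in>T i. norm w)" if i: "i < n" for i
    proof -
      have "norm (om i x0 k) \<le> (\<Sum>w\<in>D i x0 k. norm (trm t x0 k w))"
        unfolding om_def by (rule norm_sum)
      also have "\<dots> \<le> (\<Sum>w\<in>D i x0 k. norm w)" by (rule sum_mono) (rule trm_norm)
      also have "\<dots> \<le> (\<Sum>w\<in>T i. norm w)" by (rule sum_mono2[OF fT[OF i] DT]) simp
      finally show ?thesis .
    qed
    have "norm (Om x0 k) \<le> (\<Sum>i<n. norm (c i *\<^sub>R om i x0 k))" unfolding Om_def by (rule norm_sum)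
    also have "\<dots> \<le> (\<Sum>i<n. \<bar>c i\<bar> * (\<Sum>w\<in>T i. norm w))"
      by (rule sum_mono) (simp add: mult_left_mono om_le)
    finally have "norm (Om x0 k) \<le> (\<Sum>i<n. \<bar>c i\<bar> * (\<Sum>w\<in>T i. norm w))" .
    thus ?thesis unfolding F_def C_def using norm_triangle_ineq[of u "Om x0 k"] by linarith
  qed
  thus ?thesis by blast
qed

lemma F_bounded: "\<exists>M. \<forall>y\<in>hyp t. \<bar>mink t y (F y)\<bar> \<le> M"
proof -
  have "\<exists>K. compact K \<and> K \<subseteq> hyp t \<and> (\<Union>A\<in>G. (\<lambda>x. A *v x) ` K) = hyp t"
    using lat unfolding cocompact_lattice_def by (elim conjE) assumption
  then obtain K where K: "compact K" "K \<subseteq> hyp t" and cov: "(\<Union>A\<in>G. (\<lambda>x. A *v x) ` K) = hyp t"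
    by (elim exE conjE) (rule that)
  obtain C where C: "\<And>k. k \<in> K \<Longrightarrow> norm (F k) \<le> C" using F_bounded_K[OF K] by blast
  obtain B where B: "\<And>x. x \<in> K \<Longrightarrow> norm x \<le> B"
    using compact_imp_bounded[OF K(1)] unfolding bounded_iff by blast
  have "\<bar>mink t y (F y)\<bar> \<le> B * C" if y: "y \<in> hyp t" for y
  proof -
    obtain A k where A: "A \<in> G" and k: "k \<in> K" and yk: "y = A *v k" using y cov by blast
    have kh: "k \<in> hyp t" using k K(2) by auto
    have "mink t y (F y) = mink t k (F k)" unfolding yk F_G[OF A kh] G_O[OF A] ..
    also have "\<bar>\<dots>\<bar> \<le> norm k * norm (F k)" by (rule mink_bound)
    also have "\<dots> \<le> B * C" using B[OF k] C[OF k] by (simp add: mult_mono')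
    finally show ?thesis .
  qed
  thus ?thesis by blast
qed

lemma Om_wall:
  assumes j: "j < n" and q: "q \<in> W j" and y1: "y1 \<in> hplane t q" and y2: "y2 \<in> hplane t q"
  shows "Om y1 y2 = 0"
proof -
  have h1: "y1 \<in> hyp t" and q1: "mink t y1 q = 0" using y1 by (auto simp: hplane_def)
  have h2: "y2 \<in> hyp t" and q2: "mink t y2 q = 0" using y2 by (auto simp: hplane_def)
  have "D i y1 y2 = {}" if i: "i < n" for i
  proof (rule ccontr)
    assume "D i y1 y2 \<noteq> {}"
    then obtain w where w: "w \<in> D i y1 y2" by blast
    hence wW: "w \<in> W i" and sg: "sgn (mink t y1 w) \<noteq> sgn (mink t y2 w)" by (auto simp: D_def)
    obtain z where z: "z \<in> seg t y1 y2 ` {0..1}" and zw: "mink t z w = 0"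
      using D_sub[OF h1 h2, of i] w by blast
    obtain s where s: "s \<in> {0..1}" and zs: "z = seg t y1 y2 s" using z by blast
    have zh: "z \<in> hyp t" unfolding zs by (rule seg_in_hyp[OF h1 h2 s])
    have zq: "mink t z q = 0" unfolding zs seg_zero[OF h1 h2 s] q1 q2 by simp
    have "z \<in> hplane t q" "z \<in> hplane t w" using zh zq zw by (auto simp: hplane_def)
    hence "w = q \<or> w = - q" using walls_meet[OF j i q wW] by blast
    thus False using sg q1 q2 by (auto simp: mink_neg_right)
  qed
  thus ?thesis unfolding Om_def om_def by simp
qed

lemma F_wall_const:
  assumes j: "j < n" and q: "q \<in> W j" and y1: "y1 \<in> hplane t q" and y2: "y2 \<in> hplane t q"
  shows "F y2 = F y1"
proof -
  have h1: "y1 \<in> hyp t" and h2: "y2 \<in> hyp t" using y1 y2 by (auto simp: hplane_def)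
  have "Om x0 y2 = Om x0 y1 + Om y1 y2" by (rule Om_trans[OF x0_hyp h1 h2])
  thus ?thesis unfolding F_def Om_wall[OF j q y1 y2] by simp
qed

lemma F_span:
  assumes j: "j < n" and q: "q \<in> W j" and y: "y \<in> hplane t q"
  shows "F y = mink t (F y) q *\<^sub>R q"
proof (rule ccontr)
  assume ne: "F y \<noteq> mink t (F y) q *\<^sub>R q"
  define z where "z = F y - mink t (F y) q *\<^sub>R q"
  have z0: "z \<noteq> 0" using ne unfolding z_def by simp
  have qq: "mink t q q = 1" by (rule W_unit[OF j q])
  have zq: "mink t z q = 0" unfolding z_def mink_diff_left mink_scale_left qq by simp
  obtain M where M: "\<And>y. y \<in> hyp t \<Longrightarrow> \<bar>mink t y (F y)\<bar> \<le> M" using F_bounded by blast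
  obtain y2 where y2: "y2 \<in> hplane t q" and big: "\<bar>mink t y2 z\<bar> > M"
    using unbounded[OF card3 qq zq z0, of M] by blast
  have y2h: "y2 \<in> hyp t" and y2q: "mink t y2 q = 0" using y2 by (auto simp: hplane_def)
  have "mink t y2 z = mink t y2 (F y2)"
    unfolding z_def mink_diff_right mink_scale_right y2q F_wall_const[OF j q y y2] by simp
  thus False using M[OF y2h] big by simp
qed

end

context setting
begin

lemma cocompact_K:
  obtains K where "compact K" "K \<subseteq> hyp t" "(\<Union>A\<in>G. (\<lambda>x. A *v x) ` K) = hyp t"
proof -
  have "\<exists>K. compact K \<and> K \<subseteq> hyp t \<and> (\<Union>A\<in>G. (\<lambda>x. A *v x) ` K) = hyp t"
    using lat unfolding cocompact_lattice_def by (elim conjE) assumption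
  thus ?thesis using that by (elim exE conjE) blast
qed

lemma exists_plus:
  assumes j: "j < n" and q: "q \<in> W j" and y: "y \<in> hplane t q"
  shows "\<exists>y' w0 k0. k0 < n \<and> w0 \<in> W k0 \<and> y' \<in> hplane t w0 \<and> mink t y' q > 0"
proof -
  obtain K where K: "compact K" "K \<subseteq> hyp t" and cov: "(\<Union>A\<in>G. (\<lambda>x. A *v x) ` K) = hyp t"
    by (rule cocompact_K)
  obtain B where B: "\<And>x. x \<in> K \<Longrightarrow> norm x \<le> B"
    using compact_imp_bounded[OF K(1)] unfolding bounded_iff by blast
  have qq: "mink t q q = 1" by (rule W_unit[OF j q])
  have yh: "y \<in> hyp t" and yq: "mink t y q = 0" using y by (auto simp: hplane_def)
  define C0 where "C0 = 1 + \<bar>B\<bar> * norm q"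
  have C0: "C0 \<ge> 1" unfolding C0_def by simp
  define s where "s = arsinh C0"
  have shs: "sinh s = C0" unfolding s_def by simp
  have spos: "sinh s > 0" using shs C0 by simp
  have sc: "sinh s < cosh s"
  proof -
    have "cosh s - sinh s = exp (- s)" by (rule cosh_minus_sinh)
    thus ?thesis by (smt (verit) exp_gt_zero)
  qed
  define xs where "xs = cosh s *\<^sub>R y + sinh s *\<^sub>R q"
  have xsh: "xs \<in> hyp t" unfolding xs_def by (rule geod_hyp[OF yh _ qq]) (subst mink_sym, rule yq)
  then obtain A k where A: "A \<in> G" and k: "k \<in> K" and xk: "xs = A *v k" using cov by blast
  have kh: "k \<in> hyp t" using k K(2) by auto
  define r where "r = pp t k q"
  have rh: "r \<in> hyp t" and rq: "mink t r q = 0" unfolding r_def using pp_props[OF kh qq] by auto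
  have kr: "mink t k r = - sqrt (1 + (mink t k q)^2)" unfolding r_def by (rule mink_pp_self[OF kh qq])
  have "sqrt (1 + (mink t k q)^2) \<le> sqrt ((1 + \<bar>mink t k q\<bar>)^2)"
    by (rule real_sqrt_le_mono) (simp add: power2_eq_square algebra_simps)
  also have "\<dots> = 1 + \<bar>mink t k q\<bar>" by simp
  also have "\<bar>mink t k q\<bar> \<le> norm k * norm q" by (rule mink_bound)
  also have "norm k * norm q \<le> \<bar>B\<bar> * norm q" using B[OF k] by (intro mult_right_mono) auto
  finally have krC: "mink t k r \<ge> - C0" unfolding kr C0_def by simp
  define r' where "r' = A *v r"
  have r'h: "r' \<in> hyp t" unfolding r'_def by (rule G_hyp[OF A rh])
  have r'pl: "r' \<in> hplane t (A *v q)" unfolding r'_def using rh rq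
    by (simp add: hplane_def G_hyp[OF A] G_O[OF A])
  have AqW: "A *v q \<in> W j" by (rule W_G[OF A q])
  have xr: "mink t xs r' = mink t k r" unfolding xk r'_def G_O[OF A] ..
  have "mink t r' q > 0"
  proof (rule ccontr)
    assume "\<not> mink t r' q > 0"
    hence le: "mink t q r' \<le> 0" by (simp add: mink_sym)
    have "mink t y r' \<le> -1" by (rule rcs[OF yh r'h])
    have "mink t xs r' = cosh s * mink t y r' + sinh s * mink t q r'" unfolding xs_def mink_geod ..
    also have "\<dots> \<le> cosh s * (-1) + sinh s * 0"
      using \<open>mink t y r' \<le> -1\<close> le spos cosh_real_pos[of s]
      by (intro add_mono mult_left_mono) auto
    finally have "mink t xs r' \<le> - cosh s" by simp
    hence "cosh s \<le> C0" using xr krC by simp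
    thus False using sc shs by simp
  qed
  thus ?thesis using j AqW r'pl by blast
qed

definition lin :: "real^'n \<Rightarrow> real^'n \<Rightarrow> real^'n \<Rightarrow> real \<Rightarrow> real" where
  "lin y y' w s = (1 - s) * mink t y w + s * mink t y' w"

lemma first_hit:
  assumes j: "j < n" and q: "q \<in> W j" and y: "y \<in> hplane t q"
  shows "\<exists>k<n. \<exists>ws\<in>W k. \<exists>ys. ys \<in> hplane t ws \<and> mink t ys q > 0 \<and> ws \<noteq> q \<and> ws \<noteq> - q \<and>
           (\<forall>i<n. \<forall>w\<in>W i. w \<noteq> q \<and> w \<noteq> - q \<and> w \<noteq> ws \<and> w \<noteq> - ws \<longrightarrow>
              sgn (mink t y w) = sgn (mink t ys w))"
proof -
  obtain y' w0 k0 where k0: "k0 < n" and w0: "w0 \<in> W k0" and y'w0: "y' \<in> hplane t w0"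
    and y'q: "mink t y' q > 0" using exists_plus[OF j q y] by blast
  have yh: "y \<in> hyp t" and yq: "mink t y q = 0" using y by (auto simp: hplane_def)
  have y'h: "y' \<in> hyp t" and y'w: "mink t y' w0 = 0" using y'w0 by (auto simp: hplane_def)
  define Z where "Z = {w. (\<exists>i<n. w \<in> W i) \<and> w \<noteq> q \<and> w \<noteq> - q \<and> (\<exists>s\<in>{0..1}. lin y y' w s = 0)}"
  have Zsub: "Z \<subseteq> (\<Union>i\<in>{..<n}. {w \<in> W i. \<exists>z\<in>seg t y y' ` {0..1}. mink t z w = 0})"
  proof
    fix w assume "w \<in> Z"
    then obtain i s where i: "i < n" "w \<in> W i" and s: "s \<in> {0..1}" "lin y y' w s = 0"
      unfolding Z_def by blast
    have "mink t (seg t y y' s) w = 0" unfolding seg_zero[OF yh y'h s(1)] using s(2) by (simp add: lin_def)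
    thus "w \<in> (\<Union>i\<in>{..<n}. {w \<in> W i. \<exists>z\<in>seg t y y' ` {0..1}. mink t z w = 0})"
      using i s(1) by blast
  qed
  have fZ: "finite Z"
    by (rule finite_subset[OF Zsub]) (intro finite_UN_I finite_lessThan LF compact_seg[OF yh y'h], auto)
  have w0nq: "w0 \<noteq> q \<and> w0 \<noteq> - q" using y'w y'q by (auto simp: mink_neg_right)
  have w0Z: "w0 \<in> Z" unfolding Z_def using k0 w0 w0nq y'w
    by (auto simp: lin_def intro!: bexI[of _ 1])
  have anz: "mink t y w \<noteq> 0" if w: "w \<in> Z" for w
  proof
    assume "mink t y w = 0"
    obtain i where i: "i < n" "w \<in> W i" using w unfolding Z_def by blast
    have "y \<in> hplane t w" using yh \<open>mink t y w = 0\<close> by (simp add: hplane_def)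
    hence "w = q \<or> w = - q" using walls_meet[OF j i(1) q i(2) y] by blast
    thus False using w unfolding Z_def by blast
  qed
  define root where "root = (\<lambda>w. mink t y w / (mink t y w - mink t y' w))"
  have root_prop: "root w \<in> {0..1} \<and> lin y y' w (root w) = 0 \<and> (\<forall>s. lin y y' w s = 0 \<longrightarrow> s = root w)"
    if w: "w \<in> Z" for w
  proof -
    define a where "a = mink t y w"
    define b where "b = mink t y' w"
    have a0: "a \<noteq> 0" unfolding a_def by (rule anz[OF w])
    obtain s0 where s0: "s0 \<in> {0..1}" "lin y y' w s0 = 0" using w unfolding Z_def by blast
    have l0: "(1 - s0) * a + s0 * b = 0" using s0(2) unfolding lin_def a_def b_def .
    have ab: "a - b \<noteq> 0"
    proof
      assume "a - b = 0" hence "b = a" by simp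
      thus False using l0 a0 by (simp add: algebra_simps)
    qed
    have uniq: "s = a / (a - b)" if "lin y y' w s = 0" for s
    proof -
      have "(1 - s) * a + s * b = 0" using that unfolding lin_def a_def b_def .
      hence "s * (a - b) = a" by (simp add: algebra_simps)
      thus ?thesis using ab by (simp add: field_simps)
    qed
    have "s0 = root w" using uniq[OF s0(2)] unfolding root_def a_def b_def .
    thus ?thesis using s0 uniq unfolding root_def a_def b_def by auto
  qed
  have root_pos: "root w > 0" if w: "w \<in> Z" for w
  proof -
    have "root w \<ge> 0" using root_prop[OF w] by simp
    moreover have "root w \<noteq> 0"
    proof
      assume "root w = 0"
      hence "lin y y' w 0 = 0" using root_prop[OF w] by simp
      thus False using anz[OF w] by (simp add: lin_def)
    qed
    ultimately show ?thesis by simp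
  qed
  define ss where "ss = Min (root ` Z)"
  have Zne: "Z \<noteq> {}" using w0Z by blast
  have "ss \<in> root ` Z" unfolding ss_def by (rule Min_in) (use fZ Zne in auto)
  then obtain ws where wsZ: "ws \<in> Z" and rws: "root ws = ss" by blast
  have ssmin: "ss \<le> root w" if "w \<in> Z" for w unfolding ss_def using fZ that by simp
  have ss01: "ss \<in> {0..1}" using root_prop[OF wsZ] rws by simp
  have sspos: "ss > 0" using root_pos[OF wsZ] rws by simp
  obtain k where k: "k < n" "ws \<in> W k" using wsZ unfolding Z_def by blast
  have wsnq: "ws \<noteq> q" "ws \<noteq> - q" using wsZ unfolding Z_def by auto
  define ys where "ys = seg t y y' ss"
  have ysh: "ys \<in> hyp t" unfolding ys_def by (rule seg_in_hyp[OF yh y'h ss01])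
  have ysw: "mink t ys ws = 0" unfolding ys_def seg_zero[OF yh y'h ss01]
    using root_prop[OF wsZ] rws by (simp add: lin_def)
  have ysq: "mink t ys q > 0"
  proof -
    have "sgn (mink t ys q) = sgn ((1 - ss) * mink t y q + ss * mink t y' q)"
      unfolding ys_def by (rule seg_sgn[OF yh y'h ss01])
    also have "\<dots> = 1" using yq y'q sspos by simp
    finally show ?thesis by (simp add: sgn_1_pos)
  qed
  have inv: "sgn (mink t y w) = sgn (mink t ys w)"
    if i: "i < n" and wW: "w \<in> W i" and nw: "w \<noteq> q" "w \<noteq> - q" "w \<noteq> ws" "w \<noteq> - ws" for i w
  proof (rule ccontr)
    assume ne: "sgn (mink t y w) \<noteq> sgn (mink t ys w)"
    have "sgn (mink t ys w) = sgn (lin y y' w ss)"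
      unfolding ys_def lin_def by (rule seg_sgn[OF yh y'h ss01])
    moreover have "lin y y' w 0 = mink t y w" by (simp add: lin_def)
    ultimately have "sgn (lin y y' w 0) \<noteq> sgn (lin y y' w ss)" using ne by simp
    then obtain th where th: "th \<in> {0..1}" and th0: "(1 - th) * lin y y' w 0 + th * lin y y' w ss = 0"
      using ivt_lin by blast
    have "lin y y' w (th * ss) = (1 - th) * lin y y' w 0 + th * lin y y' w ss"
      by (simp add: lin_def algebra_simps)
    hence lz: "lin y y' w (th * ss) = 0" using th0 by simp
    have ts01: "th * ss \<in> {0..1}" using th ss01 by (auto simp: mult_le_one)
    have wZ: "w \<in> Z" unfolding Z_def using i wW nw lz ts01 by blast
    have "th * ss = root w" using root_prop[OF wZ] lz by blast
    hence "ss \<le> th * ss" using ssmin[OF wZ] by simp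
    moreover have "th * ss \<le> ss" using th sspos by (simp add: mult_le_cancel_right1)
    ultimately have tss: "th * ss = ss" by simp
    from lz have "lin y y' w ss = 0" unfolding tss .
    hence "mink t ys w = 0" unfolding ys_def seg_zero[OF yh y'h ss01] by (simp add: lin_def)
    hence "ys \<in> hplane t w" "ys \<in> hplane t ws" using ysh ysw by (auto simp: hplane_def)
    hence "ws = w \<or> ws = - w" using walls_meet[OF i k(1) wW k(2)] by blast
    thus False using nw by auto
  qed
  have "ys \<in> hplane t ws" using ysh ysw by (simp add: hplane_def)
  thus ?thesis using k ysq wsnq inv by blast
qed

end

context indep
begin

lemma W_index:
  assumes i: "i < n" and j: "j < n" and q: "q \<in> W j" and x: "x \<in> hplane t q"
  shows "q \<in> W i \<longleftrightarrow> i = j"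
  using walls_meet[OF i j _ q x x] q by blast

lemma key:
  assumes j: "j < n" and q: "q \<in> W j" and y: "y \<in> hplane t q"
  shows "mink t (F y) q = - c j"
proof -
  obtain k ws ys where k: "k < n" and ws: "ws \<in> W k" and ysp: "ys \<in> hplane t ws"
    and ysq: "mink t ys q > 0" and wsnq: "ws \<noteq> q" "ws \<noteq> - q"
    and inv: "\<And>i w. i < n \<Longrightarrow> w \<in> W i \<Longrightarrow> w \<noteq> q \<Longrightarrow> w \<noteq> - q \<Longrightarrow> w \<noteq> ws \<Longrightarrow> w \<noteq> - ws \<Longrightarrow>
              sgn (mink t y w) = sgn (mink t ys w)"
    using first_hit[OF j q y] by blast
  have yh: "y \<in> hyp t" and yq: "mink t y q = 0" using y by (auto simp: hplane_def)
  have ysh: "ys \<in> hyp t" and ysw: "mink t ys ws = 0" using ysp by (auto simp: hplane_def)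
  have qnz: "q \<noteq> 0" by (rule W_nz[OF j q])
  have wsnz: "ws \<noteq> 0" by (rule W_nz[OF k ws])
  have d1: "q \<noteq> - q"
  proof
    assume "q = - q" hence "(2::real) *\<^sub>R q = 0" by (metis add.right_inverse scaleR_2)
    thus False using qnz by simp
  qed
  have d2: "ws \<noteq> - ws"
  proof
    assume "ws = - ws" hence "(2::real) *\<^sub>R ws = 0" by (metis add.right_inverse scaleR_2)
    thus False using wsnz by simp
  qed
  have d3: "- q \<noteq> ws" "- q \<noteq> - ws" "q \<noteq> - ws" using wsnq by auto
  have mq: "q \<in> W i \<longleftrightarrow> i = j" "- q \<in> W i \<longleftrightarrow> i = j" if i: "i < n" for i
  proof -
    show "q \<in> W i \<longleftrightarrow> i = j" by (rule W_index[OF i j q y])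
    have "- q \<in> W j" by (rule W_neg[OF q])
    moreover have "y \<in> hplane t (- q)" using y by (simp add: hplane_neg)
    ultimately show "- q \<in> W i \<longleftrightarrow> i = j" by (rule W_index[OF i j])
  qed
  have mw: "ws \<in> W i \<longleftrightarrow> i = k" "- ws \<in> W i \<longleftrightarrow> i = k" if i: "i < n" for i
  proof -
    show "ws \<in> W i \<longleftrightarrow> i = k" by (rule W_index[OF i k ws ysp])
    have "- ws \<in> W k" by (rule W_neg[OF ws])
    moreover have "ys \<in> hplane t (- ws)" using ysp by (simp add: hplane_neg)
    ultimately show "- ws \<in> W i \<longleftrightarrow> i = k" by (rule W_index[OF i k])
  qed
  define sg where "sg = sgn (mink t y ws)"
  have tq: "trm t y ys q + trm t y ys (- q) = q"
    using ysq yq by (simp add: trm_def mink_neg_right sgn_1_pos)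
  have ta: "trm t y ys ws = (- sg / 2) *\<^sub>R ws" using ysw by (simp add: trm_def sg_def)
  have tb: "trm t y ys (- ws) = (- sg / 2) *\<^sub>R ws" using ysw by (simp add: trm_def sg_def mink_neg_right)
  have tw: "trm t y ys ws + trm t y ys (- ws) = (- sg) *\<^sub>R ws"
    unfolding ta tb scaleR_left_distrib[symmetric] by simp
  have omi: "om i y ys = (if i = j then q else 0) + (if i = k then (- sg) *\<^sub>R ws else 0)"
    if i: "i < n" for i
  proof -
    define S where "S = {w \<in> {q, - q, ws, - ws}. w \<in> W i}"
    have fS: "finite S" unfolding S_def by simp
    have SW: "S \<subseteq> W i" unfolding S_def by auto
    have DS: "D i y ys \<subseteq> S"
    proof
      fix w assume w: "w \<in> D i y ys"
      hence wW: "w \<in> W i" and sgn: "sgn (mink t y w) \<noteq> sgn (mink t ys w)" by (auto simp: D_def)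
      have "w \<in> {q, - q, ws, - ws}" using inv[OF i wW] sgn by blast
      thus "w \<in> S" unfolding S_def using wW by blast
    qed
    have "om i y ys = (\<Sum>w\<in>S. trm t y ys w)" by (rule om_sup[OF i yh ysh fS DS SW])
    also have "\<dots> = (if i = j then q else 0) + (if i = k then (- sg) *\<^sub>R ws else 0)"
    proof (cases "i = j"; cases "i = k")
      assume "i = j" "i = k"
      hence "S = {q, - q, ws, - ws}" unfolding S_def using mq[OF i] mw[OF i] by auto
      thus ?thesis using \<open>i = j\<close> \<open>i = k\<close> d1 d2 d3 wsnq tq tw by (simp add: algebra_simps)
    next
      assume "i = j" "i \<noteq> k"
      hence "S = {q, - q}" unfolding S_def using mq[OF i] mw[OF i] by auto
      thus ?thesis using \<open>i = j\<close> \<open>i \<noteq> k\<close> d1 tq by simp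
    next
      assume "i \<noteq> j" "i = k"
      hence "S = {ws, - ws}" unfolding S_def using mq[OF i] mw[OF i] by auto
      thus ?thesis using \<open>i \<noteq> j\<close> \<open>i = k\<close> d2 tw by simp
    next
      assume "i \<noteq> j" "i \<noteq> k"
      hence "S = {}" unfolding S_def using mq[OF i] mw[OF i] by auto
      thus ?thesis using \<open>i \<noteq> j\<close> \<open>i \<noteq> k\<close> by simp
    qed
    finally show ?thesis .
  qed
  have "Om y ys = (\<Sum>i<n. (if i = j then c i *\<^sub>R q else 0) + (if i = k then c i *\<^sub>R ((- sg) *\<^sub>R ws) else 0))"
    unfolding Om_def by (rule sum.cong) (simp_all add: omi scaleR_right_distrib)
  also have "\<dots> = c j *\<^sub>R q + c k *\<^sub>R ((- sg) *\<^sub>R ws)"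
    unfolding sum.distrib using j k by simp
  finally have Omv: "Om y ys = c j *\<^sub>R q + c k *\<^sub>R ((- sg) *\<^sub>R ws)" .
  have "Om x0 ys = Om x0 y + Om y ys" by (rule Om_trans[OF x0_hyp yh ysh])
  hence Fys: "F ys = F y + Om y ys" unfolding F_def by simp
  have Fy: "F y = mink t (F y) q *\<^sub>R q" by (rule F_span[OF j q y])
  have Fys': "F ys = mink t (F ys) ws *\<^sub>R ws" by (rule F_span[OF k ws ysp])
  have "mink t ys (F ys) = mink t ys (F y) + mink t ys (Om y ys)" unfolding Fys mink_add_right ..
  moreover have "mink t ys (F ys) = 0" by (subst Fys') (simp add: mink_scale_right ysw)
  moreover have "mink t ys (F y) = mink t (F y) q * mink t ys q" by (subst Fy) (simp add: mink_scale_right)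
  moreover have "mink t ys (Om y ys) = c j * mink t ys q"
    unfolding Omv by (simp add: mink_add_right mink_diff_right mink_scale_right ysw)
  ultimately have "(mink t (F y) q + c j) * mink t ys q = 0" by (simp add: algebra_simps)
  thus ?thesis using ysq by simp
qed

end

context setting
begin

theorem main: "H1_dim_ge G n"
  unfolding H1_dim_ge_def
proof (intro exI[of _ tau] conjI allI impI)
  fix i assume "i < n" thus "cocycle G (tau i)" by (rule tau_cocycle)
next
  fix c :: "nat \<Rightarrow> real" and i
  assume cb: "coboundary G (\<lambda>A. \<Sum>i<n. c i *\<^sub>R tau i A)" and i: "i < n"
  obtain u where u: "\<forall>A\<in>G. (\<Sum>i<n. c i *\<^sub>R tau i A) = A *v u - u"
    using cb unfolding coboundary_def by blast
  interpret I: indep t G n v c u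
    using setting_axioms u by (simp add: indep_def indep_axioms_def)
  define y where "y = pp t (et t) (v i)"
  have y1: "y \<in> hplane t (v i)" unfolding y_def by (rule hplane_ne[OF v_unit[OF i]])
  have y2: "y \<in> hplane t (- v i)" using y1 by (simp add: hplane_neg)
  have e1: "mink t (I.F y) (v i) = - c i" by (rule I.key[OF i v_W y1])
  have e2: "mink t (I.F y) (- v i) = - c i" by (rule I.key[OF i W_neg[OF v_W] y2])
  show "c i = 0" using e1 e2 by (simp add: mink_neg_right)
qed

end

theorem theorem3p3:
  fixes t :: "'n::finite" and \<Gamma> :: "(real^'n^'n) set"
    and n :: nat and v :: "nat \<Rightarrow> real^'n"
  assumes "CARD('n) \<ge> 3"
    and "cocompact_lattice t \<Gamma>"
    and "orientation_preserving \<Gamma>"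
    and "\<forall>i<n. embedded_tg_hypersurface t \<Gamma> (v i)"
    and "\<forall>i<n. \<forall>j<n. i \<noteq> j \<longrightarrow> disjoint_hypersurfaces t \<Gamma> (v i) (v j)"
  shows "H1_dim_ge \<Gamma> n"
proof -
  interpret setting t \<Gamma> n v by (rule setting.intro) (rule assms)+
  show ?thesis by (rule main)
qed


end
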